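(* Let $R$ be a nonzero $m\times m$ rational matrix function with no poles on $\mathbb{T}$ given by $R(z)=zC(I_n-zA)^{-1}\Gamma+R_0+\Gamma^*(zI_n-A^* )^{-1}C^*$ with $A$ stable $n\times n$, and assume $R(\zeta)\ge0$ for each $\zeta\in\mathbb{T}$. Let $\Phi\in\mathfrak{R}H^\infty_{r\times m}$ be an outer spectral factor of $R$, let $\mathcal{X}_\Phi=\{x\in\mathbb{C}^n: W_{obs}x\in\operatorname{Im}T_\Phi^*\}$, and let $C_\Phi$ be an $r\times n$ matrix with $\Phi(z)=\Phi(0)+zC_\Phi(I_n-zA)^{-1}\Gamma$ and $W_{obs}x=T_\Phi^*W_{\Phi,obs}x$ for all $x\in\mathcal{X}_\Phi$. Set $A_\circ=P_{\mathcal{X}_\Phi}A|_{\mathcal{X}_\Phi}$ on $\mathcal{X}_\Phi$ and $C_\circ=C_\Phi|_{\mathcal{X}_\Phi}$, and let $W_{\circ,obs}$ be the observability operator of $\{C_\circ,A_\circ\}$. Then: (i) If the pair $\{C,A\}$ is observable, then $W_{\Phi,obs}|_{\mathcal{X}_\Phi}$ is one-to-one on $\mathcal{X}_\Phi$, $W_{\Phi,obs}|_{\mathcal{X}_\Phi}=W_{\circ,obs}$, and the pair $\{C_\circ,A_\circ\}$ is observable. (ii) If the pair $\{A,\Gamma\}$ is controllable, then $\mathcal{X}_\Phi=\mathbb{C}^n$. In particular, if $\{C,A\}$ is observable and $\{A,\Gamma\}$ is controllable, then the realization $\Phi(z)=\Phi(0)+zC_\Phi(I_n-zA)^{-1}\Gamma$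 is minimal.
   Context: $\mathbb{T}$ is the unit circle. A square matrix is stable if its eigenvalues lie in the open unit disc. $\mathfrak{R}H^\infty_{k\times l}$: $k\times l$ rational matrix functions without poles in the closed unit disc. $\Omega^*(z):=\Omega(1/\bar z)^*$. $\ell^2_+(\mathbb{C}^k)$: square summable $\mathbb{C}^k$-valued sequences indexed by $j\ge0$; $T_\Omega$ is the block Toeplitz operator with $(i,j)$ block $\Omega_{i-j}$ ($\Omega_j$ the Fourier coefficients). $W_{obs}=\operatorname{col}(CA^j)_{j\ge0}$, $W_{\Phi,obs}=\operatorname{col}(C_\Phi A^j)_{j\ge0}$. An outer spectral factor of $R$ is $\Phi\in\mathfrak{R}H^\infty_{r\times m}$ with $R(z)=\Phi(1/\bar z)^*\Phi(z)$ and $T_\Phi$ of dense range. A pair $\{C,A\}$ is observable if its observability operator is injective; $\{A,\Gamma\}$ is controllable if $\bigvee_{\nu\ge0}A^\nu\Gamma\mathbb{C}^m=\mathbb{C}^n$; a realization is minimal if it is observable and controllable. $P_{\mathcal{X}_\Phi}$ is the orthogonal projection onto $\mathcal{X}_\Phi$. (Such a $C_\Phi$ always exists.) *)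

theory Defs
  imports "Jordan_Normal_Form.Schur_Decomposition" "HOL-Analysis.Analysis"
begin

text \<open>Inverse of an n x n matrix (unspecified if the matrix is singular).\<close>
definition minv :: "nat \<Rightarrow> complex mat \<Rightarrow> complex mat" where
  "minv n M = (SOME B. B \<in> carrier_mat n n \<and> M * B = 1\<^sub>m n \<and> B * M = 1\<^sub>m n)"

definition stable_mat :: "nat \<Rightarrow> complex mat \<Rightarrow> bool" where
  "stable_mat n A \<longleftrightarrow> A \<in> carrier_mat n n \<and> (\<forall>k. eigenvalue A k \<longrightarrow> cmod k < 1)"

definition psd_mat :: "nat \<Rightarrow> complex mat \<Rightarrow> bool" where
  "psd_mat m M \<longleftrightarrow> M \<in> carrier_mat m m \<and> mat_adjoint M = M \<and>
     (\<forall>x \<in> carrier_vec m. 0 \<le> Re ((M *\<^sub>v x) \<bullet>c x))"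

definition vnorm2 :: "complex Matrix.vec \<Rightarrow> real" where
  "vnorm2 v = (\<Sum>i<dim_vec v. (cmod (vec_index v i))\<^sup>2)"

definition ell2 :: "nat \<Rightarrow> (nat \<Rightarrow> complex Matrix.vec) \<Rightarrow> bool" where
  "ell2 k x \<longleftrightarrow> (\<forall>j. x j \<in> carrier_vec k) \<and> summable (\<lambda>j. vnorm2 (x j))"

definition obs_op :: "('v \<Rightarrow> 'w) \<Rightarrow> ('v \<Rightarrow> 'v) \<Rightarrow> 'v \<Rightarrow> nat \<Rightarrow> 'w" where
  "obs_op c a x = (\<lambda>j. c ((a ^^ j) x))"

definition W_obs :: "complex mat \<Rightarrow> complex mat \<Rightarrow> complex Matrix.vec \<Rightarrow> nat \<Rightarrow> complex Matrix.vec" where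
  "W_obs C A = obs_op (\<lambda>v. C *\<^sub>v v) (\<lambda>v. A *\<^sub>v v)"

definition observable :: "nat \<Rightarrow> complex mat \<Rightarrow> complex mat \<Rightarrow> bool" where
  "observable n C A \<longleftrightarrow> inj_on (W_obs C A) (carrier_vec n)"

definition controllable :: "nat \<Rightarrow> nat \<Rightarrow> complex mat \<Rightarrow> complex mat \<Rightarrow> bool" where
  "controllable n m A \<Gamma> \<longleftrightarrow>
     (\<forall>x \<in> carrier_vec n. \<exists>N u. (\<forall>\<nu><N. u \<nu> \<in> carrier_vec m) \<and>
        x = finsum_vec TYPE(complex) n (\<lambda>\<nu>. (A ^\<^sub>m \<nu> * \<Gamma>) *\<^sub>v u \<nu>) {..<N})"

definition minimal_realization :: "nat \<Rightarrow> nat \<Rightarrow> complex mat \<Rightarrow> complex mat \<Rightarrow> complex mat \<Rightarrow> bool" where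
  "minimal_realization n m C A \<Gamma> \<longleftrightarrow> observable n C A \<and> controllable n m A \<Gamma>"

definition orth_proj :: "complex Matrix.vec set \<Rightarrow> complex Matrix.vec \<Rightarrow> complex Matrix.vec" where
  "orth_proj X x = (THE p. p \<in> X \<and> (\<forall>w \<in> X. (x - p) \<bullet>c w = 0))"

definition RH_inf :: "nat \<Rightarrow> nat \<Rightarrow> (complex \<Rightarrow> complex mat) \<Rightarrow> bool" where
  "RH_inf r m \<Phi> \<longleftrightarrow> (\<forall>z. \<Phi> z \<in> carrier_mat r m) \<and>
     (\<forall>i<r. \<forall>j<m. \<exists>p q :: complex poly.
        \<forall>z. cmod z \<le> 1 \<longrightarrow> poly q z \<noteq> 0 \<and> \<Phi> z $$ (i,j) = poly p z / poly q z)"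

definition fourier_coeff :: "nat \<Rightarrow> nat \<Rightarrow> (complex \<Rightarrow> complex mat) \<Rightarrow> int \<Rightarrow> complex mat" where
  "fourier_coeff r m \<Phi> k = Matrix.mat r m (\<lambda>(i,j).
     integral {0..2*pi} (\<lambda>t. \<Phi> (cis t) $$ (i,j) * cis (- (of_int k * t))) / (2 * pi))"

definition toeplitz :: "nat \<Rightarrow> (int \<Rightarrow> complex mat) \<Rightarrow> (nat \<Rightarrow> complex Matrix.vec) \<Rightarrow> nat \<Rightarrow> complex Matrix.vec" where
  "toeplitz k F x = (\<lambda>i. Matrix.vec k (\<lambda>l. \<Sum>j. vec_index (F (int i - int j) *\<^sub>v x j) l))"

definition T_op :: "nat \<Rightarrow> nat \<Rightarrow> (complex \<Rightarrow> complex mat) \<Rightarrow> (nat \<Rightarrow> complex Matrix.vec) \<Rightarrow> nat \<Rightarrow> complex Matrix.vec" where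
  "T_op r m \<Phi> = toeplitz r (fourier_coeff r m \<Phi>)"

text \<open>Its Hilbert-space adjoint T_\<Phi>^* : ell^2_+(C^r) \<rightarrow> ell^2_+(C^m), the block operator
  matrix whose (i,j) block is the adjoint of the (j,i) block of T_\<Phi>, i.e. (\<Phi>_{j-i})^*.\<close>
definition T_op_adj :: "nat \<Rightarrow> nat \<Rightarrow> (complex \<Rightarrow> complex mat) \<Rightarrow> (nat \<Rightarrow> complex Matrix.vec) \<Rightarrow> nat \<Rightarrow> complex Matrix.vec" where
  "T_op_adj r m \<Phi> = toeplitz m (\<lambda>k. mat_adjoint (fourier_coeff r m \<Phi> (- k)))"

text \<open>Outer spectral factor of R: \<Phi> \<in> RH^\<infinity>_{r x m}, R = \<Phi>^* \<Phi> on the unit circle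
  (where 1/conj z = z), and T_\<Phi> has dense range in ell^2_+(C^r).\<close>
definition outer_spectral_factor ::
  "nat \<Rightarrow> nat \<Rightarrow> (complex \<Rightarrow> complex mat) \<Rightarrow> (complex \<Rightarrow> complex mat) \<Rightarrow> bool" where
  "outer_spectral_factor r m R \<Phi> \<longleftrightarrow> RH_inf r m \<Phi> \<and>
     (\<forall>\<zeta>. cmod \<zeta> = 1 \<longrightarrow> R \<zeta> = mat_adjoint (\<Phi> (1 / cnj \<zeta>)) * \<Phi> \<zeta>) \<and>
     (\<forall>y. ell2 r y \<longrightarrow> (\<forall>\<epsilon>>0. \<exists>x. ell2 m x \<and>
         (\<Sum>j. vnorm2 (T_op r m \<Phi> x j - y j)) < \<epsilon>))"

definition X_Phi :: "nat \<Rightarrow> nat \<Rightarrow> nat \<Rightarrow> complex mat \<Rightarrow> complex mat \<Rightarrow> (complex \<Rightarrow> complex mat) \<Rightarrow> complex Matrix.vec set" where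
  "X_Phi n r m C A \<Phi> = {x \<in> carrier_vec n. \<exists>y. ell2 r y \<and> W_obs C A x = T_op_adj r m \<Phi> y}"

end

theory Submission
  imports Defs "HOL-Complex_Analysis.Complex_Analysis"
begin

definition FC :: "(complex \<Rightarrow> complex) \<Rightarrow> int \<Rightarrow> complex" where
  "FC e k = integral {0..2*pi} (\<lambda>t. e (cis t) * cis (- (of_int k * t))) / (2 * pi)"


lemma cis_pow: "cis t ^ j = cis (real j * t)" by (rule Complex.DeMoivre)

lemma circle_integral_hol:
  fixes g :: "complex \<Rightarrow> complex"
  assumes rho: "1 < \<rho>" and hol: "g holomorphic_on ball 0 \<rho>"
  shows "((\<lambda>t. g (cis t) * cis (- (of_int k * t))) has_integral
           (if k \<ge> 0 then 2*pi * (deriv ^^ nat k) g 0 / fact (nat k) else 0)) {0..2*pi}"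
proof (cases "k \<ge> 0")
  case True
  define j where "j = nat k"
  have kj: "k = int j" using True j_def by simp
  have sub: "cball 0 1 \<subseteq> ball (0::complex) \<rho>" using rho by auto
  have cont: "continuous_on (cball 0 1) g"
    using holomorphic_on_imp_continuous_on[OF hol] continuous_on_subset sub by blast
  have hol1: "g holomorphic_on ball 0 1"
    by (rule holomorphic_on_subset[OF hol]) (use rho in auto)
  have "((\<lambda>u. g u / (u - 0) ^ (Suc j)) has_contour_integral ((2 * pi * \<i>) / (fact j) * (deriv ^^ j) g 0))
           (circlepath 0 1)"
    by (rule Cauchy_has_contour_integral_higher_derivative_circlepath[OF cont hol1]) simp
  then have "((\<lambda>t. g (0 + 1 * cis t) / (0 + 1 * cis t - 0) ^ Suc j * 1 * \<i> * cis t) has_integral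
        ((2 * pi * \<i>) / (fact j) * (deriv ^^ j) g 0)) {0..2*pi}"
    unfolding circlepath_def by (subst (asm) has_contour_integral_part_circlepath_iff) auto
  from has_integral_mult_right[OF this, of "- \<i>"]
  have I: "((\<lambda>t. - \<i> * (g (0 + 1 * cis t) / (0 + 1 * cis t - 0) ^ Suc j * 1 * \<i> * cis t)) has_integral
        - \<i> * ((2 * pi * \<i>) / (fact j) * (deriv ^^ j) g 0)) {0..2*pi}" .
  have e1: "- \<i> * (g (0 + 1 * cis t) / (0 + 1 * cis t - 0) ^ Suc j * 1 * \<i> * cis t)
      = g (cis t) * cis (- (of_int k * t))" for t
  proof -
    have "cis t ^ Suc j = cis t ^ j * cis t" by simp
    then have "- \<i> * (g (0 + 1 * cis t) / (0 + 1 * cis t - 0) ^ Suc j * 1 * \<i> * cis t) = g (cis t) / cis t ^ j"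
      by (simp add: field_simps)
    also have "\<dots> = g (cis t) * cis (- (real j * t))"
      by (simp add: cis_pow divide_inverse flip: cis_inverse)
    finally show ?thesis using kj by simp
  qed
  have e2: "- \<i> * ((2 * pi * \<i>) / (fact j) * (deriv ^^ j) g 0) = 2*pi * (deriv ^^ nat k) g 0 / fact (nat k)"
    using j_def by (simp add: field_simps)
  show ?thesis using I unfolding e1 e2 using True by simp
next
  case False
  define j where "j = nat (- k) - 1"
  have kj: "- k = int j + 1" using False j_def by simp
  have hol2: "(\<lambda>u. g u * u ^ j) holomorphic_on ball 0 \<rho>"
    by (intro holomorphic_intros hol)
  have "((\<lambda>u. g u * u ^ j) has_contour_integral 0) (circlepath 0 1)"
  proof (rule Cauchy_theorem_convex_simple[OF hol2])
    show "path_image (circlepath 0 1) \<subseteq> ball 0 \<rho>"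
      using rho by (auto simp: path_image_circlepath)
  qed auto
  then have "((\<lambda>t. g (0 + 1 * cis t) * (0 + 1 * cis t) ^ j * 1 * \<i> * cis t) has_integral 0) {0..2*pi}"
    unfolding circlepath_def by (subst (asm) has_contour_integral_part_circlepath_iff) auto
  from has_integral_mult_right[OF this, of "- \<i>"]
  have I: "((\<lambda>t. - \<i> * (g (0 + 1 * cis t) * (0 + 1 * cis t) ^ j * 1 * \<i> * cis t)) has_integral 0) {0..2*pi}"
    by simp
  have e1: "- \<i> * (g (0 + 1 * cis t) * (0 + 1 * cis t) ^ j * 1 * \<i> * cis t)
      = g (cis t) * cis (- (of_int k * t))" for t
  proof -
    have "- \<i> * (g (0 + 1 * cis t) * (0 + 1 * cis t) ^ j * 1 * \<i> * cis t) = g (cis t) * cis t ^ Suc j"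
      by (simp add: algebra_simps)
    also have "\<dots> = g (cis t) * cis (- (of_int k * t))"
    proof -
      have h: "- real_of_int k = real j + 1" using kj by simp
      have "- (real_of_int k * t) = (- real_of_int k) * t" by simp
      also have "\<dots> = (real j + 1) * t" by (simp only: h)
      also have "\<dots> = real (Suc j) * t" by simp
      finally have "- (real_of_int k * t) = real (Suc j) * t" .
      then show ?thesis unfolding cis_pow by simp
    qed
    finally show ?thesis .
  qed
  show ?thesis using I unfolding e1 using False by simp
qed


definition good :: "(complex \<Rightarrow> complex) \<Rightarrow> bool" where
  "good e \<longleftrightarrow> (\<exists>g \<rho>. 1 < \<rho> \<and> g holomorphic_on ball 0 \<rho> \<and> (\<forall>z. cmod z \<le> 1 \<longrightarrow> e z = g z))"

definition ccont :: "(complex \<Rightarrow> complex) \<Rightarrow> bool" where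
  "ccont e \<longleftrightarrow> continuous_on (sphere 0 1) e"

lemma FC_cong:
  assumes "\<And>z. cmod z = 1 \<Longrightarrow> e z = e' z"
  shows "FC e k = FC e' k"
  unfolding FC_def using assms by simp

lemma FC_hol:
  fixes g :: "complex \<Rightarrow> complex"
  assumes rho: "1 < \<rho>" and hol: "g holomorphic_on ball 0 \<rho>" and eq: "\<And>z. cmod z = 1 \<Longrightarrow> e z = g z"
  shows "FC e k = (if k \<ge> 0 then (deriv ^^ nat k) g 0 / fact (nat k) else 0)"
proof -
  have "FC e k = FC g k" by (rule FC_cong) (use eq in auto)
  also have "\<dots> = (if k \<ge> 0 then 2*pi * (deriv ^^ nat k) g 0 / fact (nat k) else 0) / (2 * pi)"
    unfolding FC_def using circle_integral_hol[OF rho hol, of k] by (simp add: integral_unique)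
  finally show ?thesis by auto
qed

lemma goodE:
  assumes "good e"
  obtains g \<rho> where "1 < \<rho>" "g holomorphic_on ball 0 \<rho>" "\<And>z. cmod z \<le> 1 \<Longrightarrow> e z = g z"
  using assms unfolding good_def by blast

lemma good_FC_neg: "good e \<Longrightarrow> k < 0 \<Longrightarrow> FC e k = 0"
  by (erule goodE) (subst FC_hol, auto)

lemma good_FC_0: "good e \<Longrightarrow> FC e 0 = e 0"
proof (erule goodE)
  fix g and \<rho> :: real
  assume *: "1 < \<rho>" "g holomorphic_on ball 0 \<rho>" "\<And>z. cmod z \<le> 1 \<Longrightarrow> e z = g z"
  show "FC e 0 = e 0" by (subst FC_hol[OF *(1,2)]) (auto simp: *(3))
qed

lemma good_FC_nat:
  assumes "good e"
  obtains g \<rho> where "1 < \<rho>" "g holomorphic_on ball 0 \<rho>" "\<And>z. cmod z \<le> 1 \<Longrightarrow> e z = g z"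
    "\<And>n. FC e (int n) = (deriv ^^ n) g 0 / fact n"
proof -
  obtain g \<rho> where *: "1 < \<rho>" "g holomorphic_on ball 0 \<rho>" "\<And>z. cmod z \<le> 1 \<Longrightarrow> e z = g z"
    using assms unfolding good_def by blast
  have "FC e (int n) = (deriv ^^ n) g 0 / fact n" for n
    by (subst FC_hol[OF *(1,2)]) (auto simp: *(3))
  then show ?thesis using that[OF *] by blast
qed

lemma good_decay:
  assumes "good e"
  obtains K r where "0 \<le> K" "0 < r" "r < 1" "\<And>n. cmod (FC e (int n)) \<le> K * r ^ n"
proof -
  obtain g \<rho> where rho: "1 < \<rho>" and hol: "g holomorphic_on ball 0 \<rho>"
    and FCn: "\<And>n. FC e (int n) = (deriv ^^ n) g 0 / fact n"
    using assms by (rule good_FC_nat) blast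
  define \<rho>' where "\<rho>' = (1 + \<rho>) / 2"
  have r1: "1 < \<rho>'" "\<rho>' < \<rho>" using rho by (auto simp: \<rho>'_def)
  have hol': "g holomorphic_on ball 0 \<rho>'"
    by (rule holomorphic_on_subset[OF hol]) (use r1 in auto)
  have cont': "continuous_on (cball 0 \<rho>') g"
    by (rule continuous_on_subset[OF holomorphic_on_imp_continuous_on[OF hol]]) (use r1 in auto)
  have "compact (g ` sphere 0 \<rho>')"
    by (rule compact_continuous_image) (auto intro: continuous_on_subset[OF cont'])
  then obtain B where B: "B > 0" "\<And>x. x \<in> g ` sphere 0 \<rho>' \<Longrightarrow> norm x \<le> B"
    using compact_imp_bounded bounded_pos by metis
  have nof: "norm (g x) \<le> B" if "norm (0 - x) = \<rho>'" for x
    using B(2)[of "g x"] that by auto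
  have est: "norm ((deriv ^^ n) g 0) \<le> fact n * B / \<rho>' ^ n" for n
    by (rule Cauchy_inequality[OF hol' cont']) (use r1 nof in auto)
  show ?thesis
  proof (rule that[of B "1/\<rho>'"])
    show "0 \<le> B" using B by simp
    show "0 < 1/\<rho>'" "1/\<rho>' < 1" using r1 by auto
    fix n
    have "cmod (FC e (int n)) = norm ((deriv ^^ n) g 0) / fact n"
      by (simp add: FCn norm_divide)
    also have "\<dots> \<le> (fact n * B / \<rho>' ^ n) / fact n"
      by (rule divide_right_mono[OF est]) simp
    also have "\<dots> = B * (1/\<rho>') ^ n" by (simp add: power_one_over)
    finally show "cmod (FC e (int n)) \<le> B * (1/\<rho>') ^ n" .
  qed
qed

lemma good_series:
  assumes "good e"
  shows "(\<lambda>n. FC e (int n) * cis (real n * t)) sums e (cis t)"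
proof -
  obtain g \<rho> where rho: "1 < \<rho>" and hol: "g holomorphic_on ball 0 \<rho>"
    and eq: "\<And>z. cmod z \<le> 1 \<Longrightarrow> e z = g z"
    and FCn: "\<And>n. FC e (int n) = (deriv ^^ n) g 0 / fact n"
    using assms by (rule good_FC_nat) blast
  have "(\<lambda>n. (deriv ^^ n) g 0 / fact n * (cis t - 0) ^ n) sums g (cis t)"
    by (rule holomorphic_power_series[OF hol]) (use rho in auto)
  then show ?thesis by (simp add: FCn eq cis_pow)
qed

lemma good_ccont: "good e \<Longrightarrow> ccont e"
proof (erule goodE)
  fix g and \<rho> :: real
  assume rho: "1 < \<rho>" and hol: "g holomorphic_on ball 0 \<rho>" and eq: "\<And>z. cmod z \<le> 1 \<Longrightarrow> e z = g z"
  have "continuous_on (sphere 0 1) g"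
    by (rule continuous_on_subset[OF holomorphic_on_imp_continuous_on[OF hol]]) (use rho in auto)
  then show "ccont e" unfolding ccont_def
    by (rule continuous_on_eq) (auto simp: eq)
qed

lemma ccont_cis: "ccont e \<Longrightarrow> continuous_on S (\<lambda>t. e (cis t))"
  unfolding ccont_def
  by (rule continuous_on_compose2[of "sphere 0 1" e _ cis]) (auto intro!: continuous_intros)

lemma ccont_integrable: "ccont e \<Longrightarrow> (\<lambda>t. e (cis t) * cis (- (of_int k * t))) integrable_on {0..2*pi}"
  by (intro integrable_continuous_interval continuous_intros ccont_cis)

lemma ccont_add: "ccont a \<Longrightarrow> ccont b \<Longrightarrow> ccont (\<lambda>z. a z + b z)"
  unfolding ccont_def by (intro continuous_intros)
lemma ccont_mult: "ccont a \<Longrightarrow> ccont b \<Longrightarrow> ccont (\<lambda>z. a z * b z)"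
  unfolding ccont_def by (intro continuous_intros)
lemma ccont_const: "ccont (\<lambda>z. c)"
  unfolding ccont_def by (intro continuous_intros)
lemma ccont_cnj: "ccont a \<Longrightarrow> ccont (\<lambda>z. cnj (a z))"
  unfolding ccont_def by (intro continuous_intros)
lemma ccont_sum: "(\<And>i. i \<in> I \<Longrightarrow> ccont (a i)) \<Longrightarrow> ccont (\<lambda>z. \<Sum>i\<in>I. a i z)"
  unfolding ccont_def by (intro continuous_intros) auto

lemma FC_add: "ccont a \<Longrightarrow> ccont b \<Longrightarrow> FC (\<lambda>z. a z + b z) k = FC a k + FC b k"
  unfolding FC_def distrib_right
  by (subst integral_add) (auto intro: ccont_integrable simp: add_divide_distrib)

lemma FC_cmult: "FC (\<lambda>z. c * a z) k = c * FC a k"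
  unfolding FC_def by (simp add: mult.assoc integral_mult_right)

lemma FC_sum: "finite I \<Longrightarrow> (\<And>i. i \<in> I \<Longrightarrow> ccont (a i)) \<Longrightarrow> FC (\<lambda>z. \<Sum>i\<in>I. a i z) k = (\<Sum>i\<in>I. FC (a i) k)"
  unfolding FC_def sum_distrib_right
  by (subst integral_sum) (auto intro: ccont_integrable simp: sum_divide_distrib)

lemma FC_shift: "FC (\<lambda>z. z * e z) (k + 1) = FC e k"
  unfolding FC_def
proof -
  have eq: "cis t * e (cis t) * cis (- (of_int (k + 1) * t)) = e (cis t) * cis (- (of_int k * t))" for t
  proof -
    have "cis t * e (cis t) * cis (- (of_int (k + 1) * t)) = e (cis t) * (cis t * cis (- (of_int (k + 1) * t)))"
      by (simp add: algebra_simps)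
    also have "cis t * cis (- (of_int (k + 1) * t)) = cis (- (of_int k * t))"
      unfolding cis_mult by (simp add: algebra_simps)
    finally show ?thesis .
  qed
  then show "integral {0..2 * pi} (\<lambda>t. cis t * e (cis t) * cis (- (of_int (k + 1) * t))) / (2 * pi) =
    integral {0..2 * pi} (\<lambda>t. e (cis t) * cis (- (of_int k * t))) / (2 * pi)" by (simp only: eq)
qed

lemma FC_cnj: "FC (\<lambda>z. cnj (e z)) k = cnj (FC e (- k))"
  unfolding FC_def by (simp add: integral_cnj cis_cnj)

lemma FC_prod:
  assumes ga: "good a" and gb: "good b"
  shows "(\<lambda>i. cnj (FC a (int i)) * FC b (int i + int p)) sums FC (\<lambda>z. cnj (a z) * b z) (int p)"
proof -
  obtain K r where K: "0 \<le> K" "0 < r" "r < 1" "\<And>n. cmod (FC a (int n)) \<le> K * r ^ n"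
    by (rule good_decay[OF ga]) blast
  have cb: "continuous_on {0..2*pi} (\<lambda>t. b (cis t))" by (rule ccont_cis[OF good_ccont[OF gb]])
  have "compact ((\<lambda>t. b (cis t)) ` {0..2*pi})" by (rule compact_continuous_image[OF cb compact_Icc])
  then have "bounded ((\<lambda>t. b (cis t)) ` {0..2*pi})" by (rule compact_imp_bounded)
  then obtain Bb where Bb: "Bb > 0" "\<And>x. x \<in> (\<lambda>t. b (cis t)) ` {0..2*pi} \<Longrightarrow> norm x \<le> Bb"
    unfolding bounded_pos by auto
  have Bb': "norm (b (cis t)) \<le> Bb" if "t \<in> {0..2*pi}" for t using Bb(2) that by blast
  define f where "f i t = cnj (FC a (int i)) * cis (- (real i * t)) * (b (cis t) * cis (- (of_int (int p) * t)))" for i t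
  define L where "L t = cnj (a (cis t)) * b (cis t) * cis (- (of_int (int p) * t))" for t
  have fs: "(\<lambda>i. f i t) sums L t" for t
  proof -
    have "(\<lambda>n. cnj (FC a (int n) * cis (real n * t))) sums cnj (a (cis t))"
      by (subst sums_cnj) (rule good_series[OF ga])
    hence "(\<lambda>n. cnj (FC a (int n)) * cis (- (real n * t))) sums cnj (a (cis t))" by (simp add: cis_cnj)
    from sums_mult2[OF this, of "b (cis t) * cis (- (of_int (int p) * t))"] show ?thesis
      unfolding f_def L_def by (simp add: mult.assoc)
  qed
  have bound: "norm (f i t) \<le> K * r ^ i * Bb" if "t \<in> {0..2*pi}" for i t
  proof -
    have "norm (f i t) = cmod (FC a (int i)) * norm (b (cis t))"
      unfolding f_def by (simp add: norm_mult)
    also have "\<dots> \<le> (K * r ^ i) * Bb"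
      by (rule mult_mono[OF K(4) Bb'[OF that]]) (use K in auto)
    finally show ?thesis .
  qed
  have summ: "summable (\<lambda>i. K * r ^ i * Bb)"
    by (rule summable_mult2, rule summable_mult, rule summable_geometric) (use K in auto)
  have ul: "uniform_limit {0..2*pi} (\<lambda>N t. \<Sum>i<N. f i t) (\<lambda>t. \<Sum>i. f i t) sequentially"
    by (rule Weierstrass_m_test[OF bound summ])
  have Leq: "(\<lambda>t. \<Sum>i. f i t) = L"
  proof (rule ext)
    fix t show "(\<Sum>i. f i t) = L t" using sums_unique[OF fs[of t]] by simp
  qed
  have cont: "continuous_on {0..2*pi} (\<lambda>t. \<Sum>i<N. f i t)" for N
    unfolding f_def by (intro continuous_intros cb)
  obtain I J where I: "\<And>N. ((\<lambda>t. \<Sum>i<N. f i t) has_integral I N) {0..2*pi}"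
    and J: "((\<lambda>t. \<Sum>i. f i t) has_integral J) {0..2*pi}" and lim: "I \<longlonglongrightarrow> J"
    by (rule uniform_limit_integral[OF ul cont sequentially_bot]) blast
  have fi: "(f i has_integral (cnj (FC a (int i)) * (2*pi*FC b (int i + int p)))) {0..2*pi}" for i
  proof -
    have "((\<lambda>t. b (cis t) * cis (- (of_int (int i + int p) * t))) has_integral (2*pi*FC b (int i + int p))) {0..2*pi}"
      using integrable_integral[OF ccont_integrable[OF good_ccont[OF gb], of "int i + int p"]]
      by (simp add: FC_def)
    from has_integral_mult_right[OF this, of "cnj (FC a (int i))"]
    have "((\<lambda>t. cnj (FC a (int i)) * (b (cis t) * cis (- (of_int (int i + int p) * t)))) has_integral
          cnj (FC a (int i)) * (2*pi*FC b (int i + int p))) {0..2*pi}" .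
    moreover have "cnj (FC a (int i)) * (b (cis t) * cis (- (of_int (int i + int p) * t))) = f i t" for t
    proof -
      have "cis (- (real i * t)) * cis (- (of_int (int p) * t)) = cis (- (of_int (int i + int p) * t))"
        unfolding cis_mult by (simp add: algebra_simps)
      then show ?thesis unfolding f_def by (simp add: algebra_simps)
    qed
    ultimately show ?thesis by simp
  qed
  have IN: "I N = (\<Sum>i<N. cnj (FC a (int i)) * (2*pi*FC b (int i + int p)))" for N
    using has_integral_unique[OF I[of N] has_integral_sum[OF _ fi]] by auto
  have JJ: "J = 2 * pi * FC (\<lambda>z. cnj (a z) * b z) (int p)"
  proof -
    have "J = integral {0..2*pi} L" using J Leq by (simp add: integral_unique)
    then show ?thesis unfolding FC_def L_def by simp
  qed
  have "(\<lambda>i. cnj (FC a (int i)) * (2*pi*FC b (int i + int p))) sums (2 * pi * FC (\<lambda>z. cnj (a z) * b z) (int p))"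
  proof -
    have "I = (\<lambda>N. \<Sum>i<N. cnj (FC a (int i)) * (2*pi*FC b (int i + int p)))" by (rule ext) (rule IN)
    then show ?thesis unfolding sums_def using lim JJ by simp
  qed
  from sums_divide[OF this, of "2*pi"] show ?thesis by simp
qed


lemma good_const: "good (\<lambda>z. c)"
  unfolding good_def by (rule exI[of _ "\<lambda>z. c"], rule exI[of _ 2]) auto

lemma good_id: "good (\<lambda>z. z)"
  unfolding good_def by (rule exI[of _ "\<lambda>z. z"], rule exI[of _ 2]) auto

lemma good_binop:
  assumes "good a" "good b"
    and hol: "\<And>f g S. f holomorphic_on S \<Longrightarrow> g holomorphic_on S \<Longrightarrow> (\<lambda>z. h (f z) (g z)) holomorphic_on S"
  shows "good (\<lambda>z. h (a z) (b z))"
proof -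
  obtain f \<rho> where f: "1 < \<rho>" "f holomorphic_on ball 0 \<rho>" "\<And>z. cmod z \<le> 1 \<Longrightarrow> a z = f z"
    using assms(1) unfolding good_def by blast
  obtain g \<sigma> where g: "1 < \<sigma>" "g holomorphic_on ball 0 \<sigma>" "\<And>z. cmod z \<le> 1 \<Longrightarrow> b z = g z"
    using assms(2) unfolding good_def by blast
  have "f holomorphic_on ball 0 (min \<rho> \<sigma>)" "g holomorphic_on ball 0 (min \<rho> \<sigma>)"
    by (rule holomorphic_on_subset[OF f(2)], force, rule holomorphic_on_subset[OF g(2)], force)
  then have "(\<lambda>z. h (f z) (g z)) holomorphic_on ball 0 (min \<rho> \<sigma>)" by (rule hol)
  then show ?thesis unfolding good_def using f g
    by (intro exI[of _ "\<lambda>z. h (f z) (g z)"] exI[of _ "min \<rho> \<sigma>"]) auto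
qed

lemma good_add: "good a \<Longrightarrow> good b \<Longrightarrow> good (\<lambda>z. a z + b z)"
  by (rule good_binop[where h="(+)"], assumption, assumption, rule holomorphic_on_add)
lemma good_mult: "good a \<Longrightarrow> good b \<Longrightarrow> good (\<lambda>z. a z * b z)"
  by (rule good_binop[where h="(*)"], assumption, assumption, rule holomorphic_on_mult)
lemma good_cmult: "good a \<Longrightarrow> good (\<lambda>z. c * a z)"
  by (rule good_mult[OF good_const])
lemma good_sum: "finite I \<Longrightarrow> (\<And>i. i \<in> I \<Longrightarrow> good (a i)) \<Longrightarrow> good (\<lambda>z. \<Sum>i\<in>I. a i z)"
proof (induction I rule: finite_induct)
  case empty then show ?case using good_const[of 0] by simp
next
  case (insert x F) then show ?case by (simp add: good_add)
qed

lemma mult_entry: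
  assumes "A \<in> carrier_mat a k" "B \<in> carrier_mat k b" "i < a" "j < b"
  shows "(A * B) $$ (i,j) = (\<Sum>l<k. A $$ (i,l) * B $$ (l,j))"
  using assms by (auto simp: scalar_prod_def lessThan_atLeast0 intro!: sum.cong)

lemma adj_carrier: "A \<in> carrier_mat a b \<Longrightarrow> mat_adjoint A \<in> carrier_mat b a"
  unfolding mat_adjoint_def by auto

lemma adj_entry:
  assumes "A \<in> carrier_mat a b" "i < b" "j < a"
  shows "mat_adjoint A $$ (i,j) = cnj (A $$ (j,i))"
  using assms unfolding mat_adjoint_def by (simp add: mat_of_rows_index)

lemma minv_unique:
  assumes M: "M \<in> carrier_mat n n" and B: "B \<in> carrier_mat n n"
    and MB: "M * B = 1\<^sub>m n" and BM: "B * M = 1\<^sub>m n"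
  shows "minv n M = B"
proof -
  have ex: "\<exists>B. B \<in> carrier_mat n n \<and> M * B = 1\<^sub>m n \<and> B * M = 1\<^sub>m n" using B MB BM by blast
  define B' where "B' = minv n M"
  have B': "B' \<in> carrier_mat n n" "M * B' = 1\<^sub>m n" "B' * M = 1\<^sub>m n"
    using someI_ex[OF ex] unfolding B'_def minv_def by blast+
  have "B' = B' * 1\<^sub>m n" using B'(1) by simp
  also have "\<dots> = B' * (M * B)" by (simp add: MB)
  also have "\<dots> = (B' * M) * B" by (rule assoc_mult_mat[symmetric, OF B'(1) M B])
  also have "\<dots> = B" using B' B by simp
  finally show ?thesis unfolding B'_def .
qed

lemma adj_inv:
  fixes M :: "complex mat"
  assumes M: "M \<in> carrier_mat n n" and d: "Determinant.det M \<noteq> 0"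
  shows "(1 / Determinant.det M) \<cdot>\<^sub>m adj_mat M \<in> carrier_mat n n"
    "M * ((1 / Determinant.det M) \<cdot>\<^sub>m adj_mat M) = 1\<^sub>m n"
    "((1 / Determinant.det M) \<cdot>\<^sub>m adj_mat M) * M = 1\<^sub>m n"
proof -
  note adj = adj_mat[OF M]
  show "(1 / Determinant.det M) \<cdot>\<^sub>m adj_mat M \<in> carrier_mat n n" using adj by simp
  have "M * ((1 / Determinant.det M) \<cdot>\<^sub>m adj_mat M) = (1 / Determinant.det M) \<cdot>\<^sub>m (M * adj_mat M)"
    using mult_smult_distrib[OF M adj(1)] .
  also have "\<dots> = 1\<^sub>m n" unfolding adj(2) using d by (auto intro!: eq_matI simp: field_simps)
  finally show "M * ((1 / Determinant.det M) \<cdot>\<^sub>m adj_mat M) = 1\<^sub>m n" .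
  have "((1 / Determinant.det M) \<cdot>\<^sub>m adj_mat M) * M = (1 / Determinant.det M) \<cdot>\<^sub>m (adj_mat M * M)"
    using mult_smult_assoc_mat[OF adj(1) M] .
  also have "\<dots> = 1\<^sub>m n" unfolding adj(3) using d by (auto intro!: eq_matI simp: field_simps)
  finally show "((1 / Determinant.det M) \<cdot>\<^sub>m adj_mat M) * M = 1\<^sub>m n" .
qed

lemma minv_adj:
  assumes M: "M \<in> carrier_mat n n" and d: "Determinant.det M \<noteq> 0"
  shows "minv n M = (1 / Determinant.det M) \<cdot>\<^sub>m adj_mat M"
  by (rule minv_unique[OF M adj_inv[OF M d]])

lemma minv_props:
  assumes M: "M \<in> carrier_mat n n" and d: "Determinant.det M \<noteq> 0"
  shows "minv n M \<in> carrier_mat n n" "M * minv n M = 1\<^sub>m n" "minv n M * M = 1\<^sub>m n"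
  unfolding minv_adj[OF M d] using adj_inv[OF M d] by auto

lemma finite_norm_gt1:
  assumes "finite S" "\<And>z. z \<in> S \<Longrightarrow> 1 < cmod z"
  obtains \<rho> where "1 < \<rho>" "\<And>z. z \<in> S \<Longrightarrow> \<rho> \<le> cmod z"
proof (cases "S = {}")
  case True then show ?thesis using that[of 2] by auto
next
  case False
  have fin: "finite (cmod ` S)" using assms(1) by simp
  have ne: "cmod ` S \<noteq> {}" using False by simp
  have "1 < Min (cmod ` S)" using Min_in[OF fin ne] assms(2) by auto
  moreover have "Min (cmod ` S) \<le> cmod z" if "z \<in> S" for z using Min_le[OF fin] that by simp
  ultimately show ?thesis using that by blast
qed

lemma one_minus_smult_char:
  fixes A :: "complex mat"
  assumes A: "A \<in> carrier_mat n n" and z: "z \<noteq> 0"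
  shows "1\<^sub>m n - z \<cdot>\<^sub>m A = (- z) \<cdot>\<^sub>m char_matrix A (1 / z)"
  unfolding char_matrix_def using A z by (auto intro!: eq_matI simp: field_simps)

lemma stable_det:
  assumes st: "stable_mat n A"
  obtains \<rho> where "1 < \<rho>" "\<And>z. cmod z < \<rho> \<Longrightarrow> Determinant.det (1\<^sub>m n - z \<cdot>\<^sub>m A) \<noteq> 0"
proof -
  have A: "A \<in> carrier_mat n n" and ev: "\<And>k. eigenvalue A k \<Longrightarrow> cmod k < 1"
    using st unfolding stable_mat_def by auto
  define F where "F = {z. Determinant.det (1\<^sub>m n - z \<cdot>\<^sub>m A) = 0}"
  define E where "E = {k. poly (char_poly A) k = 0}"
  have cp: "char_poly A \<noteq> 0" using degree_monic_char_poly[OF A] by auto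
  have finE: "finite E" unfolding E_def by (rule poly_roots_finite[OF cp])
  have key: "z \<noteq> 0 \<and> 1 / z \<in> E \<and> 1 < cmod z" if "z \<in> F" for z
  proof -
    have d: "Determinant.det (1\<^sub>m n - z \<cdot>\<^sub>m A) = 0" using that unfolding F_def by simp
    have z0: "z \<noteq> 0"
    proof
      assume "z = 0"
      then have "1\<^sub>m n - z \<cdot>\<^sub>m A = 1\<^sub>m n" using A by (auto intro!: eq_matI)
      then show False using d by simp
    qed
    have "(- z) ^ n * Determinant.det (char_matrix A (1 / z)) = 0"
      using d unfolding one_minus_smult_char[OF A z0] using A by (simp add: char_matrix_def)
    then have "Determinant.det (char_matrix A (1 / z)) = 0" using z0 by simp
    then have eig: "eigenvalue A (1 / z)" using eigenvalue_det[OF A] by simp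
    then have "1 / z \<in> E" unfolding E_def using eigenvalue_root_char_poly[OF A] by simp
    moreover have "cmod (1 / z) < 1" using ev[OF eig] .
    then have "1 < cmod z" using z0 by (simp add: norm_divide divide_less_eq)
    ultimately show ?thesis using z0 by simp
  qed
  have "F \<subseteq> (\<lambda>k. 1 / k) ` E"
  proof
    fix z assume "z \<in> F"
    with key have "1 / z \<in> E" "z \<noteq> 0" by auto
    then show "z \<in> (\<lambda>k. 1 / k) ` E" by (intro image_eqI[of _ _ "1/z"]) auto
  qed
  then have finF: "finite F" using finE finite_subset by blast
  obtain \<rho> where rho: "1 < \<rho>" "\<And>z. z \<in> F \<Longrightarrow> \<rho> \<le> cmod z"
    using finite_norm_gt1[OF finF] key by blast
  show ?thesis
  proof (rule that[OF rho(1)])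
    fix z assume "cmod z < \<rho>"
    then have "z \<notin> F" using rho(2) by force
    then show "Determinant.det (1\<^sub>m n - z \<cdot>\<^sub>m A) \<noteq> 0" unfolding F_def by simp
  qed
qed

lemma det_holo:
  assumes M: "\<And>z. M z \<in> carrier_mat k k"
    and hol: "\<And>i j. i < k \<Longrightarrow> j < k \<Longrightarrow> (\<lambda>z. M z $$ (i,j)) holomorphic_on S"
  shows "(\<lambda>z. Determinant.det (M z)) holomorphic_on S"
proof -
  have eq: "(\<lambda>z. Determinant.det (M z)) = (\<lambda>z. \<Sum> p \<in> {p. p permutes {0 ..< k}}.
     signof p * (\<Prod> i = 0 ..< k. M z $$ (i, p i)))"
    by (rule ext) (rule det_def'[OF M])
  show ?thesis unfolding eq
  proof (intro holomorphic_on_sum holomorphic_on_mult holomorphic_on_const holomorphic_on_prod)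
    fix p i assume p: "p \<in> {p. p permutes {0..<k}}" and i: "i \<in> {0..<k}"
    have "p i < k" using p i permutes_in_image by fastforce
    then show "(\<lambda>z. M z $$ (i, p i)) holomorphic_on S" using hol i by auto
  qed
qed

lemma adj_holo:
  assumes M: "\<And>z. M z \<in> carrier_mat k k"
    and hol: "\<And>i j. i < k \<Longrightarrow> j < k \<Longrightarrow> (\<lambda>z. M z $$ (i,j)) holomorphic_on S"
    and ij: "i < k" "j < k"
  shows "(\<lambda>z. adj_mat (M z) $$ (i,j)) holomorphic_on S"
proof -
  have eq: "adj_mat (M z) $$ (i,j) = (-1)^(j+i) * Determinant.det (mat_delete (M z) j i)" for z
    using M[of z] ij unfolding adj_mat_def cofactor_def by auto
  have "(\<lambda>z. Determinant.det (mat_delete (M z) j i)) holomorphic_on S"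
  proof (rule det_holo[of _ "k - 1"])
    show "mat_delete (M z) j i \<in> carrier_mat (k - 1) (k - 1)" for z by (rule mat_delete_carrier[OF M])
    fix a b assume ab: "a < k - 1" "b < k - 1"
    have eq2: "mat_delete (M z) j i $$ (a,b) = M z $$ (if a < j then a else Suc a, if b < i then b else Suc b)" for z
      using M[of z] ab unfolding mat_delete_def by auto
    show "(\<lambda>z. mat_delete (M z) j i $$ (a, b)) holomorphic_on S"
      unfolding eq2 by (rule hol) (use ab in auto)
  qed
  then show ?thesis unfolding eq by (intro holomorphic_intros)
qed

lemma pow_mat_Suc_left:
  assumes A: "A \<in> carrier_mat n n"
  shows "A ^\<^sub>m Suc k = A * A ^\<^sub>m k"
proof (induction k)
  case 0 then show ?case using A by simp
next
  case (Suc k)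
  have "A ^\<^sub>m Suc (Suc k) = (A * A ^\<^sub>m k) * A" using Suc by simp
  also have "\<dots> = A * (A ^\<^sub>m k * A)" using A by (simp add: assoc_mult_mat[of _ n n _ n _ n])
  also have "\<dots> = A * A ^\<^sub>m Suc k" by simp
  finally show ?case .
qed

lemma FC_const: "k \<noteq> 0 \<Longrightarrow> FC (\<lambda>z. c) k = 0"
proof (cases "k < 0")
  case True then show ?thesis using good_FC_neg[OF good_const] by blast
next
  case False
  assume "k \<noteq> 0"
  then have "nat k \<noteq> 0" using False by simp
  moreover have "FC (\<lambda>z. c) k = (if k \<ge> 0 then (deriv ^^ nat k) (\<lambda>z. c) 0 / fact (nat k) else 0)"
    by (rule FC_hol[of 2]) auto
  ultimately show ?thesis by simp
qed

lemma good_cong: "(\<And>z. cmod z \<le> 1 \<Longrightarrow> e z = e' z) \<Longrightarrow> good e' \<Longrightarrow> good e"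
  unfolding good_def by metis

lemma triple_entry:
  fixes C X G :: "complex mat"
  assumes C: "C \<in> carrier_mat p n" and X: "X \<in> carrier_mat n n" and G: "G \<in> carrier_mat n q"
    and a: "a < p" and b: "b < q"
  shows "(C * X * G) $$ (a,b) = (\<Sum>d<n. \<Sum>c<n. (C $$ (a,c) * G $$ (d,b)) * X $$ (c,d))"
proof -
  have CX: "C * X \<in> carrier_mat p n" using C X by simp
  have "(C * X * G) $$ (a,b) = (\<Sum>d<n. (C * X) $$ (a,d) * G $$ (d,b))"
    by (rule mult_entry[OF CX G a b])
  also have "\<dots> = (\<Sum>d<n. (\<Sum>c<n. C $$ (a,c) * X $$ (c,d)) * G $$ (d,b))"
    by (rule sum.cong[OF refl]) (simp add: mult_entry[OF C X a])
  also have "\<dots> = (\<Sum>d<n. \<Sum>c<n. (C $$ (a,c) * G $$ (d,b)) * X $$ (c,d))"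
    unfolding sum_distrib_right by (intro sum.cong refl) (simp only: mult.assoc mult.commute[of "X $$ _" "G $$ _"])
  finally show ?thesis .
qed

context
  fixes n :: nat and A :: "complex mat"
  assumes st: "stable_mat n A"
begin

lemma Acar: "A \<in> carrier_mat n n" using st unfolding stable_mat_def by auto

definition Mz :: "complex \<Rightarrow> complex mat" where
  "Mz z = minv n (1\<^sub>m n - z \<cdot>\<^sub>m A)"

lemma det_ne: "cmod z \<le> 1 \<Longrightarrow> Determinant.det (1\<^sub>m n - z \<cdot>\<^sub>m A) \<noteq> 0"
proof -
  assume z: "cmod z \<le> 1"
  obtain \<rho> where "1 < \<rho>" "\<And>z. cmod z < \<rho> \<Longrightarrow> Determinant.det (1\<^sub>m n - z \<cdot>\<^sub>m A) \<noteq> 0"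
    by (rule stable_det[OF st]) blast
  then show ?thesis using z by auto
qed

lemma IzA_car: "1\<^sub>m n - z \<cdot>\<^sub>m A \<in> carrier_mat n n" using Acar by auto

lemma Mz_props:
  assumes "cmod z \<le> 1"
  shows "Mz z \<in> carrier_mat n n" "(1\<^sub>m n - z \<cdot>\<^sub>m A) * Mz z = 1\<^sub>m n" "Mz z * (1\<^sub>m n - z \<cdot>\<^sub>m A) = 1\<^sub>m n"
  unfolding Mz_def using minv_props[OF IzA_car det_ne[OF assms]] by auto

lemma Mz_good:
  assumes c: "c < n" and d: "d < n"
  shows "good (\<lambda>z. Mz z $$ (c,d))"
proof -
  obtain \<rho> where rho: "1 < \<rho>" and dne: "\<And>z. cmod z < \<rho> \<Longrightarrow> Determinant.det (1\<^sub>m n - z \<cdot>\<^sub>m A) \<noteq> 0"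
    by (rule stable_det[OF st]) blast
  have ent: "(\<lambda>z. (1\<^sub>m n - z \<cdot>\<^sub>m A) $$ (i,j)) holomorphic_on ball 0 \<rho>" if "i < n" "j < n" for i j
  proof -
    have "(\<lambda>z. (1\<^sub>m n - z \<cdot>\<^sub>m A) $$ (i,j)) = (\<lambda>z. (if i = j then 1 else 0) - z * A $$ (i,j))"
      using that Acar by (auto simp: fun_eq_iff)
    then show ?thesis by (auto intro!: holomorphic_intros)
  qed
  have hd: "(\<lambda>z. Determinant.det (1\<^sub>m n - z \<cdot>\<^sub>m A)) holomorphic_on ball 0 \<rho>"
    by (rule det_holo[OF IzA_car ent])
  have ha: "(\<lambda>z. adj_mat (1\<^sub>m n - z \<cdot>\<^sub>m A) $$ (c,d)) holomorphic_on ball 0 \<rho>"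
    by (rule adj_holo[OF IzA_car ent c d])
  have hol: "(\<lambda>z. adj_mat (1\<^sub>m n - z \<cdot>\<^sub>m A) $$ (c,d) / Determinant.det (1\<^sub>m n - z \<cdot>\<^sub>m A)) holomorphic_on ball 0 \<rho>"
    by (rule holomorphic_on_divide[OF ha hd]) (use dne in auto)
  have eq: "Mz z $$ (c,d) = adj_mat (1\<^sub>m n - z \<cdot>\<^sub>m A) $$ (c,d) / Determinant.det (1\<^sub>m n - z \<cdot>\<^sub>m A)"
    if "cmod z \<le> 1" for z
  proof -
    have "Mz z = (1 / Determinant.det (1\<^sub>m n - z \<cdot>\<^sub>m A)) \<cdot>\<^sub>m adj_mat (1\<^sub>m n - z \<cdot>\<^sub>m A)"
      unfolding Mz_def by (rule minv_adj[OF IzA_car det_ne[OF that]])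
    moreover have "adj_mat (1\<^sub>m n - z \<cdot>\<^sub>m A) \<in> carrier_mat n n" by (rule adj_mat(1)[OF IzA_car])
    ultimately show ?thesis using c d by (simp add: carrier_matD)
  qed
  show ?thesis unfolding good_def using rho hol eq by blast
qed

lemma Mz_rec:
  assumes z: "cmod z \<le> 1" and c: "c < n" and d: "d < n"
  shows "Mz z $$ (c,d) = (if c = d then 1 else 0) + z * (\<Sum>e<n. A $$ (c,e) * Mz z $$ (e,d))"
proof -
  note P = Mz_props[OF z]
  have "(if c = d then 1 else 0) = ((1\<^sub>m n - z \<cdot>\<^sub>m A) * Mz z) $$ (c,d)" using P(2) c d by simp
  also have "\<dots> = (\<Sum>e<n. (1\<^sub>m n - z \<cdot>\<^sub>m A) $$ (c,e) * Mz z $$ (e,d))"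
    by (rule mult_entry[OF IzA_car P(1) c d])
  also have "\<dots> = (\<Sum>e<n. (if c = e then Mz z $$ (e,d) else 0) - z * (A $$ (c,e) * Mz z $$ (e,d)))"
    by (rule sum.cong) (use c Acar in \<open>auto simp: algebra_simps\<close>)
  also have "\<dots> = Mz z $$ (c,d) - z * (\<Sum>e<n. A $$ (c,e) * Mz z $$ (e,d))"
    using c by (simp add: sum_subtractf sum_distrib_left)
  finally have "(if c = d then 1 else 0) = Mz z $$ (c,d) - z * (\<Sum>e<n. A $$ (c,e) * Mz z $$ (e,d))" .
  then show ?thesis by (simp add: algebra_simps)
qed


lemma Mz_0: "Mz 0 = 1\<^sub>m n"
proof -
  have "1\<^sub>m n - 0 \<cdot>\<^sub>m A = 1\<^sub>m n" using Acar by (auto intro!: eq_matI)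
  then show ?thesis unfolding Mz_def by (simp add: minv_unique[of "1\<^sub>m n" n "1\<^sub>m n"])
qed

lemma FC_Mz: "c < n \<Longrightarrow> d < n \<Longrightarrow> FC (\<lambda>z. Mz z $$ (c,d)) (int k) = (A ^\<^sub>m k) $$ (c,d)"
proof (induction k arbitrary: c d)
  case 0
  then show ?case using good_FC_0[OF Mz_good[OF 0]] Acar by (simp add: Mz_0)
next
  case (Suc k)
  define S where "S z = (\<Sum>e<n. A $$ (c,e) * Mz z $$ (e,d))" for z
  have gS: "good S" unfolding S_def
    by (intro good_sum good_cmult Mz_good) (use Suc.prems in auto)
  have cS: "ccont (\<lambda>z. z * S z)" by (intro good_ccont good_mult good_id gS)
  have "FC (\<lambda>z. Mz z $$ (c,d)) (int (Suc k)) = FC (\<lambda>z. Mz z $$ (c,d)) (int k + 1)" by (simp add: add.commute)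
  also have "\<dots> = FC (\<lambda>z. (if c = d then 1 else 0) + z * S z) (int k + 1)"
    unfolding S_def by (rule FC_cong, rule Mz_rec) (use Suc.prems in auto)
  also have "\<dots> = FC (\<lambda>z. if c = d then 1 else 0) (int k + 1) + FC (\<lambda>z. z * S z) (int k + 1)"
    by (rule FC_add[OF ccont_const cS])
  also have "\<dots> = FC S (int k)" by (simp add: FC_const FC_shift)
  also have "\<dots> = (\<Sum>e<n. FC (\<lambda>z. A $$ (c,e) * Mz z $$ (e,d)) (int k))"
    unfolding S_def by (rule FC_sum) (use Suc.prems in \<open>auto intro!: good_ccont good_cmult Mz_good\<close>)
  also have "\<dots> = (\<Sum>e<n. A $$ (c,e) * (A ^\<^sub>m k) $$ (e,d))"
    by (rule sum.cong[OF refl]) (simp add: FC_cmult Suc.IH Suc.prems)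
  also have "\<dots> = (A * A ^\<^sub>m k) $$ (c,d)"
    by (rule mult_entry[symmetric, OF Acar _ Suc.prems]) (use Acar in simp)
  also have "\<dots> = (A ^\<^sub>m Suc k) $$ (c,d)" by (simp only: pow_mat_Suc_left[OF Acar])
  finally show ?case .
qed

lemma E_eq:
  assumes C: "C \<in> carrier_mat p n" and G: "G \<in> carrier_mat n q" and a: "a < p" and b: "b < q"
    and z: "cmod z \<le> 1"
  shows "(C * Mz z * G) $$ (a,b) = (\<Sum>d<n. \<Sum>c<n. (C $$ (a,c) * G $$ (d,b)) * Mz z $$ (c,d))"
  by (rule triple_entry[OF C Mz_props(1)[OF z] G a b])

lemma E_good:
  assumes C: "C \<in> carrier_mat p n" and G: "G \<in> carrier_mat n q" and a: "a < p" and b: "b < q"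
  shows "good (\<lambda>z. (C * Mz z * G) $$ (a,b))"
proof (rule good_cong)
  show "(C * Mz z * G) $$ (a,b) = (\<Sum>d<n. \<Sum>c<n. (C $$ (a,c) * G $$ (d,b)) * Mz z $$ (c,d))"
    if "cmod z \<le> 1" for z by (rule E_eq[OF C G a b that])
  show "good (\<lambda>z. \<Sum>d<n. \<Sum>c<n. (C $$ (a,c) * G $$ (d,b)) * Mz z $$ (c,d))"
    by (intro good_sum good_cmult Mz_good) auto
qed

lemma FC_E:
  assumes C: "C \<in> carrier_mat p n" and G: "G \<in> carrier_mat n q" and a: "a < p" and b: "b < q"
  shows "FC (\<lambda>z. (C * Mz z * G) $$ (a,b)) (int k) = (C * A ^\<^sub>m k * G) $$ (a,b)"
proof -
  have "FC (\<lambda>z. (C * Mz z * G) $$ (a,b)) (int k) =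
        FC (\<lambda>z. \<Sum>d<n. \<Sum>c<n. (C $$ (a,c) * G $$ (d,b)) * Mz z $$ (c,d)) (int k)"
    by (rule FC_cong) (simp add: E_eq[OF C G a b])
  also have "\<dots> = (\<Sum>d<n. \<Sum>c<n. (C $$ (a,c) * G $$ (d,b)) * FC (\<lambda>z. Mz z $$ (c,d)) (int k))"
  proof -
    have "FC (\<lambda>z. \<Sum>d<n. \<Sum>c<n. (C $$ (a,c) * G $$ (d,b)) * Mz z $$ (c,d)) (int k) =
       (\<Sum>d<n. FC (\<lambda>z. \<Sum>c<n. (C $$ (a,c) * G $$ (d,b)) * Mz z $$ (c,d)) (int k))"
      by (rule FC_sum) (auto intro!: good_ccont good_sum good_cmult Mz_good)
    also have "\<dots> = (\<Sum>d<n. \<Sum>c<n. FC (\<lambda>z. (C $$ (a,c) * G $$ (d,b)) * Mz z $$ (c,d)) (int k))"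
      by (rule sum.cong[OF refl], rule FC_sum) (auto intro!: good_ccont good_sum good_cmult Mz_good)
    finally show ?thesis by (simp add: FC_cmult)
  qed
  also have "\<dots> = (\<Sum>d<n. \<Sum>c<n. (C $$ (a,c) * G $$ (d,b)) * (A ^\<^sub>m k) $$ (c,d))"
    by (simp add: FC_Mz)
  also have "\<dots> = (C * A ^\<^sub>m k * G) $$ (a,b)"
    by (rule triple_entry[symmetric, OF C _ G a b]) (use Acar in simp)
  finally show ?thesis .
qed

end

lemma unit_cnj: "cmod z = 1 \<Longrightarrow> z * cnj z = 1"
  using complex_norm_square[of z] by simp

lemma adj_triple:
  fixes C X G :: "complex mat"
  assumes C: "C \<in> carrier_mat p n" and X: "X \<in> carrier_mat n n" and G: "G \<in> carrier_mat n q"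
    and l: "l < q" and b: "b < p"
  shows "(mat_adjoint G * mat_adjoint X * mat_adjoint C) $$ (l,b) = cnj ((C * X * G) $$ (b,l))"
proof -
  have "(mat_adjoint G * mat_adjoint X * mat_adjoint C) $$ (l,b) =
     (\<Sum>d<n. \<Sum>c<n. (mat_adjoint G $$ (l,c) * mat_adjoint C $$ (d,b)) * mat_adjoint X $$ (c,d))"
    by (rule triple_entry[OF adj_carrier[OF G] adj_carrier[OF X] adj_carrier[OF C] l b])
  also have "\<dots> = (\<Sum>d<n. \<Sum>c<n. cnj (G $$ (c,l)) * cnj (C $$ (b,d)) * cnj (X $$ (d,c)))"
    using C X G l b by (intro sum.cong refl) (simp add: adj_entry)
  also have "\<dots> = (\<Sum>c<n. \<Sum>d<n. cnj (G $$ (c,l)) * cnj (C $$ (b,d)) * cnj (X $$ (d,c)))"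
    by (rule sum.swap)
  also have "\<dots> = cnj (\<Sum>d<n. \<Sum>c<n. (C $$ (b,c) * G $$ (d,l)) * X $$ (c,d))"
    by (simp add: mult_ac)
  also have "\<dots> = cnj ((C * X * G) $$ (b,l))"
    by (simp add: triple_entry[OF C X G b l])
  finally show ?thesis .
qed

context
  fixes n :: nat and A :: "complex mat"
  assumes st: "stable_mat n A"
begin

lemma third_minv:
  assumes z: "cmod z = 1"
  shows "minv n (z \<cdot>\<^sub>m 1\<^sub>m n - mat_adjoint A) = mat_adjoint (z \<cdot>\<^sub>m Mz n A z)"
proof -
  have A: "A \<in> carrier_mat n n" by (rule Acar[OF st])
  have z1: "cmod z \<le> 1" using z by simp
  note P = Mz_props[OF st z1]
  have zc: "z * cnj z = 1" by (rule unit_cnj[OF z])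
  define M where "M = z \<cdot>\<^sub>m 1\<^sub>m n - mat_adjoint A"
  define B where "B = mat_adjoint (z \<cdot>\<^sub>m Mz n A z)"
  have Mc: "M \<in> carrier_mat n n" unfolding M_def using adj_carrier[OF A] by auto
  have Bc: "B \<in> carrier_mat n n" unfolding B_def by (rule adj_carrier) (use P(1) in simp)
  have Ment: "M $$ (i,e) = (if i = e then z else 0) - cnj (A $$ (e,i))" if "i < n" "e < n" for i e
    unfolding M_def using that A adj_carrier[OF A] by (simp add: adj_entry[OF A])
  have Bent: "B $$ (e,j) = cnj z * cnj (Mz n A z $$ (j,e))" if "e < n" "j < n" for e j
    unfolding B_def using that P(1) by (simp add: adj_entry[of _ n n])
  have IzA: "(1\<^sub>m n - z \<cdot>\<^sub>m A) $$ (i,e) = (if i = e then 1 else 0) - z * A $$ (i,e)" if "i < n" "e < n" for i e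
    using that A by simp
  have MB: "M * B = 1\<^sub>m n"
  proof (rule eq_matI)
    fix i j assume ij: "i < dim_row (1\<^sub>m n)" "j < dim_col (1\<^sub>m n)"
    then have i: "i < n" and j: "j < n" by auto
    have "(M * B) $$ (i,j) = (\<Sum>e<n. M $$ (i,e) * B $$ (e,j))" by (rule mult_entry[OF Mc Bc i j])
    also have "\<dots> = cnj (\<Sum>e<n. Mz n A z $$ (j,e) * (1\<^sub>m n - z \<cdot>\<^sub>m A) $$ (e,i))"
      unfolding cnj_sum
    proof (rule sum.cong[OF refl])
      fix e assume "e \<in> {..<n}" then have e: "e < n" by simp
      show "M $$ (i,e) * B $$ (e,j) = cnj (Mz n A z $$ (j,e) * (1\<^sub>m n - z \<cdot>\<^sub>m A) $$ (e,i))"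
        unfolding Ment[OF i e] Bent[OF e j] IzA[OF e i]
        using zc by (cases "i = e") (auto simp: algebra_simps)
    qed
    also have "\<dots> = cnj ((Mz n A z * (1\<^sub>m n - z \<cdot>\<^sub>m A)) $$ (j,i))"
      by (simp add: mult_entry[OF P(1) IzA_car[OF st] j i])
    also have "\<dots> = 1\<^sub>m n $$ (i,j)" using P(3) i j by simp
    finally show "(M * B) $$ (i,j) = 1\<^sub>m n $$ (i,j)" .
  qed (use Mc Bc in auto)
  have BM: "B * M = 1\<^sub>m n"
  proof (rule eq_matI)
    fix i j assume ij: "i < dim_row (1\<^sub>m n)" "j < dim_col (1\<^sub>m n)"
    then have i: "i < n" and j: "j < n" by auto
    have "(B * M) $$ (i,j) = (\<Sum>e<n. B $$ (i,e) * M $$ (e,j))" by (rule mult_entry[OF Bc Mc i j])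
    also have "\<dots> = cnj (\<Sum>e<n. (1\<^sub>m n - z \<cdot>\<^sub>m A) $$ (j,e) * Mz n A z $$ (e,i))"
      unfolding cnj_sum
    proof (rule sum.cong[OF refl])
      fix e assume "e \<in> {..<n}" then have e: "e < n" by simp
      show "B $$ (i,e) * M $$ (e,j) = cnj ((1\<^sub>m n - z \<cdot>\<^sub>m A) $$ (j,e) * Mz n A z $$ (e,i))"
        unfolding Ment[OF e j] Bent[OF i e] IzA[OF j e]
        using zc by (cases "e = j") (auto simp: algebra_simps)
    qed
    also have "\<dots> = cnj (((1\<^sub>m n - z \<cdot>\<^sub>m A) * Mz n A z) $$ (j,i))"
      by (simp add: mult_entry[OF IzA_car[OF st] P(1) j i])
    also have "\<dots> = 1\<^sub>m n $$ (i,j)" using P(2) i j by simp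
    finally show "(B * M) $$ (i,j) = 1\<^sub>m n $$ (i,j)" .
  qed (use Mc Bc in auto)
  show ?thesis using minv_unique[OF Mc Bc MB BM] unfolding M_def B_def .
qed

end

lemma add3_entry:
  fixes X Y Z :: "'a::plus mat"
  assumes "X \<in> carrier_mat m m" "Y \<in> carrier_mat m m" "Z \<in> carrier_mat m m" "l < m" "b < m"
  shows "(X + Y + Z) $$ (l,b) = X $$ (l,b) + Y $$ (l,b) + Z $$ (l,b)"
  using assms by (simp add: carrier_matD)
lemma smult_entry:
  fixes X :: "'a::times mat"
  assumes "X \<in> carrier_mat p q" "l < p" "b < q"
  shows "(c \<cdot>\<^sub>m X) $$ (l,b) = c * X $$ (l,b)"
  using assms by (simp add: carrier_matD)

lemma rat_good:
  assumes "\<forall>z. cmod z \<le> 1 \<longrightarrow> poly q z \<noteq> 0 \<and> e z = poly p z / poly q z"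
  shows "good e"
proof -
  have q0: "q \<noteq> 0"
  proof
    assume "q = 0"
    with assms[rule_format, of 0] show False by simp
  qed
  define F where "F = {z. poly q z = 0}"
  have finF: "finite F" unfolding F_def by (rule poly_roots_finite[OF q0])
  have "1 < cmod z" if "z \<in> F" for z using assms that unfolding F_def by (metis not_le mem_Collect_eq)
  then obtain \<rho> where rho: "1 < \<rho>" "\<And>z. z \<in> F \<Longrightarrow> \<rho> \<le> cmod z"
    using finite_norm_gt1[OF finF] by blast
  have "(\<lambda>z. poly p z / poly q z) holomorphic_on ball 0 \<rho>"
  proof (intro holomorphic_intros)
    fix z assume "z \<in> ball (0::complex) \<rho>"
    then have "z \<notin> F" using rho(2) by force
    then show "poly q z \<noteq> 0" unfolding F_def by simp
  qed
  then show ?thesis unfolding good_def using rho(1) assms by blast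
qed

lemma RH_good:
  assumes "RH_inf r m \<Phi>" "a < r" "b < m"
  shows "good (\<lambda>z. \<Phi> z $$ (a,b))"
proof -
  obtain p q :: "complex poly" where "\<forall>z. cmod z \<le> 1 \<longrightarrow> poly q z \<noteq> 0 \<and> \<Phi> z $$ (a,b) = poly p z / poly q z"
    using assms unfolding RH_inf_def by blast
  then show ?thesis by (rule rat_good)
qed

context
  fixes n m r :: nat
    and A C \<Gamma> R\<^sub>0 :: "complex mat"
    and R \<Phi> :: "complex \<Rightarrow> complex mat"
  assumes st: "stable_mat n A"
    and C: "C \<in> carrier_mat m n"
    and Gam: "\<Gamma> \<in> carrier_mat n m"
    and R0: "R\<^sub>0 \<in> carrier_mat m m"
    and R_real: "\<forall>\<zeta>. cmod \<zeta> = 1 \<longrightarrow>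
        R \<zeta> = \<zeta> \<cdot>\<^sub>m (C * minv n (1\<^sub>m n - \<zeta> \<cdot>\<^sub>m A) * \<Gamma>) + R\<^sub>0
              + mat_adjoint \<Gamma> * minv n (\<zeta> \<cdot>\<^sub>m 1\<^sub>m n - mat_adjoint A) * mat_adjoint C"
    and Phi: "outer_spectral_factor r m R \<Phi>"
begin

abbreviation E where "E z \<equiv> C * Mz n A z * \<Gamma>"

lemma R_entry1:
  assumes z: "cmod z = 1" and l: "l < m" and b: "b < m"
  shows "R z $$ (l,b) = z * E z $$ (l,b) + R\<^sub>0 $$ (l,b) + cnj (z * E z $$ (b,l))"
proof -
  have z1: "cmod z \<le> 1" using z by simp
  have Mc: "Mz n A z \<in> carrier_mat n n" by (rule Mz_props(1)[OF st z1])
  have Ec: "E z \<in> carrier_mat m m" using C Mc Gam by simp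
  have R: "R z = z \<cdot>\<^sub>m E z + R\<^sub>0 + mat_adjoint \<Gamma> * mat_adjoint (z \<cdot>\<^sub>m Mz n A z) * mat_adjoint C"
  proof -
    have "minv n (1\<^sub>m n - z \<cdot>\<^sub>m A) = Mz n A z" by (simp add: Mz_def[OF st])
    then show ?thesis using R_real z third_minv[OF st z] by simp
  qed
  have zM: "z \<cdot>\<^sub>m Mz n A z \<in> carrier_mat n n" using Mc by simp
  have T: "(mat_adjoint \<Gamma> * mat_adjoint (z \<cdot>\<^sub>m Mz n A z) * mat_adjoint C) $$ (l,b)
      = cnj ((C * (z \<cdot>\<^sub>m Mz n A z) * \<Gamma>) $$ (b,l))"
    by (rule adj_triple[OF C zM Gam l b])
  have "C * (z \<cdot>\<^sub>m Mz n A z) * \<Gamma> = z \<cdot>\<^sub>m E z"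
    using mult_smult_distrib[OF C Mc, of z] mult_smult_assoc_mat[of "C * Mz n A z" m n \<Gamma> m z] C Mc Gam
    by simp
  then have T': "(C * (z \<cdot>\<^sub>m Mz n A z) * \<Gamma>) $$ (b,l) = z * E z $$ (b,l)" using smult_entry[OF Ec b l] by simp
  have c3: "mat_adjoint \<Gamma> * mat_adjoint (z \<cdot>\<^sub>m Mz n A z) * mat_adjoint C \<in> carrier_mat m m"
    using adj_carrier[OF Gam] adj_carrier[OF zM] adj_carrier[OF C] by simp
  have zE: "z \<cdot>\<^sub>m E z \<in> carrier_mat m m" using Ec by simp
  show ?thesis unfolding R add3_entry[OF zE R0 c3 l b] smult_entry[OF Ec l b] T T' by simp
qed

lemma Phi_car: "\<Phi> z \<in> carrier_mat r m"
  using Phi unfolding outer_spectral_factor_def RH_inf_def by auto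

lemma R_entry2:
  assumes z: "cmod z = 1" and l: "l < m" and b: "b < m"
  shows "R z $$ (l,b) = (\<Sum>a<r. cnj (\<Phi> z $$ (a,l)) * \<Phi> z $$ (a,b))"
proof -
  have zc: "z * cnj z = 1" by (rule unit_cnj[OF z])
  then have "cnj z \<noteq> 0" by auto
  then have "1 / cnj z = z * cnj z / cnj z" using zc by simp
  also have "\<dots> = z" using \<open>cnj z \<noteq> 0\<close> by simp
  finally have "1 / cnj z = z" .
  then have "R z = mat_adjoint (\<Phi> z) * \<Phi> z" using Phi z unfolding outer_spectral_factor_def by auto
  then show ?thesis
    using mult_entry[OF adj_carrier[OF Phi_car] Phi_car l b] adj_entry[OF Phi_car] l
    by simp
qed

lemma Phi_good: "a < r \<Longrightarrow> b < m \<Longrightarrow> good (\<lambda>z. \<Phi> z $$ (a,b))"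
  using Phi unfolding outer_spectral_factor_def by (blast intro: RH_good)

lemma FC_R1:
  assumes l: "l < m" and b: "b < m"
  shows "FC (\<lambda>z. R z $$ (l,b)) (int k + 1) = (C * A ^\<^sub>m k * \<Gamma>) $$ (l,b)"
proof -
  have gE: "good (\<lambda>z. E z $$ (a,c))" if "a < m" "c < m" for a c by (rule E_good[OF st C Gam that])
  have g1: "good (\<lambda>z. z * E z $$ (a,c))" if "a < m" "c < m" for a c by (intro good_mult good_id gE that)
  have "FC (\<lambda>z. R z $$ (l,b)) (int k + 1) =
        FC (\<lambda>z. (z * E z $$ (l,b) + R\<^sub>0 $$ (l,b)) + cnj (z * E z $$ (b,l))) (int k + 1)"
    by (rule FC_cong) (simp add: R_entry1 l b)
  also have "\<dots> = FC (\<lambda>z. z * E z $$ (l,b)) (int k + 1) + FC (\<lambda>z. R\<^sub>0 $$ (l,b)) (int k + 1)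
      + FC (\<lambda>z. cnj (z * E z $$ (b,l))) (int k + 1)"
  proof -
    have c1: "ccont (\<lambda>z. z * E z $$ (l,b))" by (rule good_ccont[OF g1[OF l b]])
    have c2: "ccont (\<lambda>z. R\<^sub>0 $$ (l,b))" by (rule ccont_const)
    have c3: "ccont (\<lambda>z. cnj (z * E z $$ (b,l)))" by (rule ccont_cnj[OF good_ccont[OF g1[OF b l]]])
    show ?thesis by (simp only: FC_add[OF ccont_add[OF c1 c2] c3] FC_add[OF c1 c2])
  qed
  also have "\<dots> = (C * A ^\<^sub>m k * \<Gamma>) $$ (l,b)"
  proof -
    have "FC (\<lambda>z. cnj (z * E z $$ (b,l))) (int k + 1) = cnj (FC (\<lambda>z. z * E z $$ (b,l)) (- (int k + 1)))"
      by (rule FC_cnj)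
    also have "\<dots> = 0" using good_FC_neg[OF g1[OF b l], of "- (int k + 1)"] by simp
    finally have "FC (\<lambda>z. cnj (z * E z $$ (b,l))) (int k + 1) = 0" .
    then show ?thesis by (simp add: FC_shift FC_const FC_E[OF st C Gam l b])
  qed
  finally show ?thesis .
qed

lemma FC_R_sums:
  assumes l: "l < m" and b: "b < m"
  shows "(\<lambda>i. \<Sum>a<r. cnj (FC (\<lambda>z. \<Phi> z $$ (a,l)) (int i)) * FC (\<lambda>z. \<Phi> z $$ (a,b)) (int i + int (Suc k)))
          sums (C * A ^\<^sub>m k * \<Gamma>) $$ (l,b)"
proof -
  have "FC (\<lambda>z. R z $$ (l,b)) (int (Suc k)) = FC (\<lambda>z. \<Sum>a<r. cnj (\<Phi> z $$ (a,l)) * \<Phi> z $$ (a,b)) (int (Suc k))"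
    by (rule FC_cong) (simp add: R_entry2 l b)
  also have "\<dots> = (\<Sum>a<r. FC (\<lambda>z. cnj (\<Phi> z $$ (a,l)) * \<Phi> z $$ (a,b)) (int (Suc k)))"
  proof (rule FC_sum)
    fix a assume "a \<in> {..<r}"
    then have a: "a < r" by simp
    show "ccont (\<lambda>z. cnj (\<Phi> z $$ (a,l)) * \<Phi> z $$ (a,b))"
      by (rule ccont_mult[OF ccont_cnj[OF good_ccont[OF Phi_good[OF a l]]] good_ccont[OF Phi_good[OF a b]]])
  qed simp
  finally have eq: "(C * A ^\<^sub>m k * \<Gamma>) $$ (l,b) = (\<Sum>a<r. FC (\<lambda>z. cnj (\<Phi> z $$ (a,l)) * \<Phi> z $$ (a,b)) (int (Suc k)))"
    using FC_R1[OF l b, of k] by (simp add: add.commute)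
  show ?thesis unfolding eq
  proof (rule sums_sum)
    fix a assume "a \<in> {..<r}"
    then have a: "a < r" by simp
    show "(\<lambda>i. cnj (FC (\<lambda>z. \<Phi> z $$ (a,l)) (int i)) * FC (\<lambda>z. \<Phi> z $$ (a,b)) (int i + int (Suc k)))
        sums FC (\<lambda>z. cnj (\<Phi> z $$ (a,l)) * \<Phi> z $$ (a,b)) (int (Suc k))"
      by (rule FC_prod[OF Phi_good[OF a l] Phi_good[OF a b]])
  qed
qed

end

lemma ell2_car: "ell2 k y \<Longrightarrow> y j \<in> carrier_vec k"
  unfolding ell2_def by auto

lemma ell2_bound:
  assumes y: "ell2 k y" and a: "a < k"
  obtains B where "0 \<le> B" "\<And>j. cmod (vec_index (y j) a) \<le> B"
proof -
  have s: "summable (\<lambda>j. vnorm2 (y j))" using y unfolding ell2_def by auto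
  have nn: "0 \<le> vnorm2 v" for v unfolding vnorm2_def by (auto intro: sum_nonneg)
  define S where "S = (\<Sum>j. vnorm2 (y j))"
  have "cmod (vec_index (y j) a) \<le> sqrt S" for j
  proof -
    have dj: "dim_vec (y j) = k" using ell2_car[OF y] by auto
    have "(cmod (vec_index (y j) a))\<^sup>2 \<le> vnorm2 (y j)"
      unfolding vnorm2_def dj using a by (intro member_le_sum) auto
    also have "vnorm2 (y j) \<le> S"
      unfolding S_def using sum_le_suminf[OF s, of "{j}"] nn by auto
    finally show ?thesis by (simp add: real_le_rsqrt)
  qed
  then show ?thesis using that[of "sqrt S"] by (meson norm_ge_zero order_trans)
qed

context
  fixes r m :: nat and \<Phi> :: "complex \<Rightarrow> complex mat"
  assumes RH: "RH_inf r m \<Phi>"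
begin

lemma gP: "a < r \<Longrightarrow> b < m \<Longrightarrow> good (\<lambda>z. \<Phi> z $$ (a,b))"
  by (rule RH_good[OF RH])

lemma fc_car: "fourier_coeff r m \<Phi> k \<in> carrier_mat r m"
  unfolding fourier_coeff_def by simp

lemma fc_entry: "a < r \<Longrightarrow> b < m \<Longrightarrow> fourier_coeff r m \<Phi> k $$ (a,b) = FC (\<lambda>z. \<Phi> z $$ (a,b)) k"
  unfolding fourier_coeff_def FC_def by simp

lemma adjG_vec:
  assumes v: "v \<in> carrier_vec r" and l: "l < m"
  shows "vec_index (mat_adjoint (fourier_coeff r m \<Phi> k) *\<^sub>v v) l = (\<Sum>a<r. cnj (FC (\<lambda>z. \<Phi> z $$ (a,l)) k) * vec_index v a)"
proof -
  have ac: "mat_adjoint (fourier_coeff r m \<Phi> k) \<in> carrier_mat m r" by (rule adj_carrier[OF fc_car])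
  show ?thesis using ac v l
    by (auto simp: scalar_prod_def lessThan_atLeast0 adj_entry[OF fc_car] fc_entry intro!: sum.cong)
qed

lemma G_vec:
  assumes u: "u \<in> carrier_vec m" and a: "a < r"
  shows "vec_index (fourier_coeff r m \<Phi> k *\<^sub>v u) a = (\<Sum>b<m. FC (\<lambda>z. \<Phi> z $$ (a,b)) k * vec_index u b)"
  using fc_car[of k] u a by (auto simp: scalar_prod_def lessThan_atLeast0 fc_entry intro!: sum.cong)

lemma T_dim: "dim_vec (T_op_adj r m \<Phi> y i) = m"
  unfolding T_op_adj_def toeplitz_def by simp

lemma T_entry:
  assumes y: "\<And>j. y j \<in> carrier_vec r" and l: "l < m"
  shows "vec_index (T_op_adj r m \<Phi> y i) l = (\<Sum>j. \<Sum>a<r. cnj (FC (\<lambda>z. \<Phi> z $$ (a,l)) (int j - int i)) * vec_index (y j) a)"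
  unfolding T_op_adj_def toeplitz_def using l by (simp add: adjG_vec[OF y l])

lemma T_summable:
  assumes y: "ell2 r y" and a: "a < r" and l: "l < m"
  shows "summable (\<lambda>j. cnj (FC (\<lambda>z. \<Phi> z $$ (a,l)) (int j - int i)) * vec_index (y j) a)"
proof -
  obtain K \<rho> where K: "0 \<le> K" "0 < \<rho>" "\<rho> < 1" "\<And>n. cmod (FC (\<lambda>z. \<Phi> z $$ (a,l)) (int n)) \<le> K * \<rho> ^ n"
    by (rule good_decay[OF gP[OF a l]]) blast
  obtain B where B: "0 \<le> B" "\<And>j. cmod (vec_index (y j) a) \<le> B" by (rule ell2_bound[OF y a]) blast
  show ?thesis
  proof (rule summable_comparison_test_ev)
    show "eventually (\<lambda>j. norm (cnj (FC (\<lambda>z. \<Phi> z $$ (a,l)) (int j - int i)) * vec_index (y j) a) \<le> K * B / \<rho> ^ i * \<rho> ^ j) sequentially"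
      unfolding eventually_at_top_linorder
    proof (intro exI allI impI)
      fix j assume ij: "i \<le> j"
      then have e: "int j - int i = int (j - i)" by simp
      have "norm (cnj (FC (\<lambda>z. \<Phi> z $$ (a,l)) (int j - int i)) * vec_index (y j) a)
          = cmod (FC (\<lambda>z. \<Phi> z $$ (a,l)) (int (j - i))) * cmod (vec_index (y j) a)" by (simp add: e norm_mult)
      also have "\<dots> \<le> (K * \<rho> ^ (j - i)) * B"
        by (rule mult_mono[OF K(4) B(2)]) (use K in auto)
      also have "\<rho> ^ (j - i) = \<rho> ^ j / \<rho> ^ i" using ij K(2) by (simp add: power_diff)
      finally show "norm (cnj (FC (\<lambda>z. \<Phi> z $$ (a,l)) (int j - int i)) * vec_index (y j) a) \<le> K * B / \<rho> ^ i * \<rho> ^ j"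
        by (simp add: field_simps)
    qed
    show "summable (\<lambda>j. K * B / \<rho> ^ i * \<rho> ^ j)"
      by (rule summable_mult, rule summable_geometric) (use K in auto)
  qed
qed

lemma T_summable2:
  assumes y: "ell2 r y" and l: "l < m"
  shows "summable (\<lambda>j. \<Sum>a<r. cnj (FC (\<lambda>z. \<Phi> z $$ (a,l)) (int j - int i)) * vec_index (y j) a)"
  by (rule summable_sum) (use T_summable[OF y _ l] in auto)

end

lemma vnorm2_nonneg: "0 \<le> vnorm2 v"
  unfolding vnorm2_def by (auto intro: sum_nonneg)

lemma sq_add_le: "(cmod (a + b))\<^sup>2 \<le> 2 * (cmod a)\<^sup>2 + 2 * (cmod b)\<^sup>2"
proof -
  have "cmod (a + b) \<le> cmod a + cmod b" by (rule norm_triangle_ineq)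
  then have "(cmod (a + b))\<^sup>2 \<le> (cmod a + cmod b)\<^sup>2" by (simp add: power_mono)
  also have "\<dots> \<le> 2 * (cmod a)\<^sup>2 + 2 * (cmod b)\<^sup>2"
    using sum_squares_ge_zero[of "cmod a - cmod b" 0] by (simp add: power2_eq_square algebra_simps)
  finally show ?thesis .
qed

lemma vnorm2_add:
  assumes "v \<in> carrier_vec k" "w \<in> carrier_vec k"
  shows "vnorm2 (v + w) \<le> 2 * vnorm2 v + 2 * vnorm2 w"
proof -
  have "vnorm2 (v + w) = (\<Sum>i<k. (cmod (vec_index v i + vec_index w i))\<^sup>2)"
    unfolding vnorm2_def using assms by (auto intro!: sum.cong)
  also have "\<dots> \<le> (\<Sum>i<k. 2 * (cmod (vec_index v i))\<^sup>2 + 2 * (cmod (vec_index w i))\<^sup>2)"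
    by (rule sum_mono) (rule sq_add_le)
  also have "\<dots> = 2 * vnorm2 v + 2 * vnorm2 w"
    unfolding vnorm2_def using assms by (simp add: sum.distrib sum_distrib_left)
  finally show ?thesis .
qed

lemma vnorm2_smult: "vnorm2 (c \<cdot>\<^sub>v v) = (cmod c)\<^sup>2 * vnorm2 v"
  unfolding vnorm2_def by (simp add: norm_mult power_mult_distrib sum_distrib_left)

lemma ell2_add: "ell2 k y1 \<Longrightarrow> ell2 k y2 \<Longrightarrow> ell2 k (\<lambda>j. y1 j + y2 j)"
proof -
  assume y1: "ell2 k y1" and y2: "ell2 k y2"
  have s1: "summable (\<lambda>j. vnorm2 (y1 j))" and s2: "summable (\<lambda>j. vnorm2 (y2 j))"
    using y1 y2 unfolding ell2_def by auto
  have "summable (\<lambda>j. vnorm2 (y1 j + y2 j))"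
  proof (rule summable_comparison_test[OF _ summable_add[OF summable_mult[OF s1] summable_mult[OF s2]]])
    show "\<exists>N. \<forall>j\<ge>N. norm (vnorm2 (y1 j + y2 j)) \<le> 2 * vnorm2 (y1 j) + 2 * vnorm2 (y2 j)"
      using vnorm2_add[OF ell2_car[OF y1] ell2_car[OF y2]] vnorm2_nonneg by auto
  qed
  then show ?thesis using y1 y2 ell2_car unfolding ell2_def by (auto simp del: vnorm2_def)
qed

lemma ell2_smult: "ell2 k y \<Longrightarrow> ell2 k (\<lambda>j. c \<cdot>\<^sub>v y j)"
  unfolding ell2_def vnorm2_smult by (auto intro: summable_mult)

lemma ell2_shift: "ell2 k y \<Longrightarrow> ell2 k (\<lambda>j. y (Suc j))"
  unfolding ell2_def using summable_Suc_iff[of "\<lambda>j. vnorm2 (y j)"] by auto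

lemma vadd_idx: "v \<in> carrier_vec k \<Longrightarrow> w \<in> carrier_vec k \<Longrightarrow> a < k \<Longrightarrow>
  vec_index (v + w) a = vec_index v a + vec_index w a"
  by simp

lemma vsmult_idx: "v \<in> carrier_vec k \<Longrightarrow> a < k \<Longrightarrow> vec_index (c \<cdot>\<^sub>v v) a = c * vec_index v a"
  by simp

context
  fixes r m :: nat and \<Phi> :: "complex \<Rightarrow> complex mat"
  assumes RH: "RH_inf r m \<Phi>"
begin

lemma T_add:
  assumes y1: "ell2 r y1" and y2: "ell2 r y2"
  shows "T_op_adj r m \<Phi> (\<lambda>j. y1 j + y2 j) i = T_op_adj r m \<Phi> y1 i + T_op_adj r m \<Phi> y2 i"
proof (rule eq_vecI)
  show "dim_vec (T_op_adj r m \<Phi> (\<lambda>j. y1 j + y2 j) i) = dim_vec (T_op_adj r m \<Phi> y1 i + T_op_adj r m \<Phi> y2 i)"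
    by (simp add: T_dim[OF RH])
  fix l assume "l < dim_vec (T_op_adj r m \<Phi> y1 i + T_op_adj r m \<Phi> y2 i)"
  then have l: "l < m" by (simp add: T_dim[OF RH])
  have c: "y1 j + y2 j \<in> carrier_vec r" for j using ell2_car[OF y1] ell2_car[OF y2] by auto
  have "vec_index (T_op_adj r m \<Phi> (\<lambda>j. y1 j + y2 j) i) l =
     (\<Sum>j. (\<Sum>a<r. cnj (FC (\<lambda>z. \<Phi> z $$ (a,l)) (int j - int i)) * vec_index (y1 j) a) +
          (\<Sum>a<r. cnj (FC (\<lambda>z. \<Phi> z $$ (a,l)) (int j - int i)) * vec_index (y2 j) a))"
    unfolding T_entry[OF RH c l]
  proof (intro arg_cong[where f=suminf] ext)
    fix j
    show "(\<Sum>a<r. cnj (FC (\<lambda>z. \<Phi> z $$ (a,l)) (int j - int i)) * vec_index (y1 j + y2 j) a) =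
      (\<Sum>a<r. cnj (FC (\<lambda>z. \<Phi> z $$ (a,l)) (int j - int i)) * vec_index (y1 j) a) +
      (\<Sum>a<r. cnj (FC (\<lambda>z. \<Phi> z $$ (a,l)) (int j - int i)) * vec_index (y2 j) a)"
      unfolding sum.distrib[symmetric]
      by (rule sum.cong[OF refl]) (simp add: vadd_idx[OF ell2_car[OF y1] ell2_car[OF y2]] algebra_simps)
  qed
  also have "\<dots> = vec_index (T_op_adj r m \<Phi> y1 i) l + vec_index (T_op_adj r m \<Phi> y2 i) l"
    unfolding T_entry[OF RH ell2_car[OF y1] l] T_entry[OF RH ell2_car[OF y2] l]
    by (rule suminf_add[symmetric, OF T_summable2[OF RH y1 l] T_summable2[OF RH y2 l]])
  finally show "vec_index (T_op_adj r m \<Phi> (\<lambda>j. y1 j + y2 j) i) l =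
      vec_index (T_op_adj r m \<Phi> y1 i + T_op_adj r m \<Phi> y2 i) l"
    using l by (simp add: T_dim[OF RH])
qed

lemma T_smult:
  assumes y: "ell2 r y"
  shows "T_op_adj r m \<Phi> (\<lambda>j. c \<cdot>\<^sub>v y j) i = c \<cdot>\<^sub>v T_op_adj r m \<Phi> y i"
proof (rule eq_vecI)
  show "dim_vec (T_op_adj r m \<Phi> (\<lambda>j. c \<cdot>\<^sub>v y j) i) = dim_vec (c \<cdot>\<^sub>v T_op_adj r m \<Phi> y i)"
    by (simp add: T_dim[OF RH])
  fix l assume "l < dim_vec (c \<cdot>\<^sub>v T_op_adj r m \<Phi> y i)"
  then have l: "l < m" by (simp add: T_dim[OF RH])
  have cc: "c \<cdot>\<^sub>v y j \<in> carrier_vec r" for j using ell2_car[OF y] by auto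
  have "vec_index (T_op_adj r m \<Phi> (\<lambda>j. c \<cdot>\<^sub>v y j) i) l =
     (\<Sum>j. c * (\<Sum>a<r. cnj (FC (\<lambda>z. \<Phi> z $$ (a,l)) (int j - int i)) * vec_index (y j) a))"
    unfolding T_entry[OF RH cc l]
  proof (intro arg_cong[where f=suminf] ext)
    fix j
    show "(\<Sum>a<r. cnj (FC (\<lambda>z. \<Phi> z $$ (a,l)) (int j - int i)) * vec_index (c \<cdot>\<^sub>v y j) a) =
      c * (\<Sum>a<r. cnj (FC (\<lambda>z. \<Phi> z $$ (a,l)) (int j - int i)) * vec_index (y j) a)"
      unfolding sum_distrib_left
      by (rule sum.cong[OF refl]) (simp add: vsmult_idx[OF ell2_car[OF y]] algebra_simps)
  qed
  also have "\<dots> = c * vec_index (T_op_adj r m \<Phi> y i) l"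
    unfolding T_entry[OF RH ell2_car[OF y] l]
    by (rule suminf_mult[OF T_summable2[OF RH y l]])
  finally show "vec_index (T_op_adj r m \<Phi> (\<lambda>j. c \<cdot>\<^sub>v y j) i) l = vec_index (c \<cdot>\<^sub>v T_op_adj r m \<Phi> y i) l"
    using l by (simp add: T_dim[OF RH])
qed

lemma T_shift:
  assumes y: "ell2 r y"
  shows "T_op_adj r m \<Phi> y (Suc i) = T_op_adj r m \<Phi> (\<lambda>j. y (Suc j)) i"
proof (rule eq_vecI)
  show "dim_vec (T_op_adj r m \<Phi> y (Suc i)) = dim_vec (T_op_adj r m \<Phi> (\<lambda>j. y (Suc j)) i)"
    by (simp add: T_dim[OF RH])
  fix l assume "l < dim_vec (T_op_adj r m \<Phi> (\<lambda>j. y (Suc j)) i)"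
  then have l: "l < m" by (simp add: T_dim[OF RH])
  define f where "f j = (\<Sum>a<r. cnj (FC (\<lambda>z. \<Phi> z $$ (a,l)) (int j - int (Suc i))) * vec_index (y j) a)" for j
  have f0: "f 0 = 0" unfolding f_def
    by (rule sum.neutral) (use good_FC_neg[OF gP[OF RH _ l]] in auto)
  have sf: "summable f" unfolding f_def by (rule T_summable2[OF RH y l])
  have "vec_index (T_op_adj r m \<Phi> (\<lambda>j. y (Suc j)) i) l = (\<Sum>j. f (Suc j))"
    unfolding T_entry[OF RH ell2_car[OF ell2_shift[OF y]] l] f_def by simp
  also have "\<dots> = suminf f" using suminf_split_head[OF sf] f0 by simp
  also have "\<dots> = vec_index (T_op_adj r m \<Phi> y (Suc i)) l"
    unfolding T_entry[OF RH ell2_car[OF y] l] f_def ..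
  finally show "vec_index (T_op_adj r m \<Phi> y (Suc i)) l = vec_index (T_op_adj r m \<Phi> (\<lambda>j. y (Suc j)) i) l" by simp
qed

end

lemma funpow_mat:
  assumes A: "A \<in> carrier_mat n n" and x: "x \<in> carrier_vec n"
  shows "((\<lambda>v. A *\<^sub>v v) ^^ j) x = (A ^\<^sub>m j) *\<^sub>v x"
proof (induction j)
  case 0 then show ?case using A x by simp
next
  case (Suc j)
  have "((\<lambda>v. A *\<^sub>v v) ^^ Suc j) x = A *\<^sub>v ((A ^\<^sub>m j) *\<^sub>v x)" using Suc by simp
  also have "\<dots> = (A * A ^\<^sub>m j) *\<^sub>v x" using A x by (simp add: assoc_mult_mat_vec[of _ n n _ n])
  also have "\<dots> = (A ^\<^sub>m Suc j) *\<^sub>v x" by (simp only: pow_mat_Suc_left[OF A])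
  finally show ?case .
qed

lemma mat_vec_zero: "A \<in> carrier_mat a b \<Longrightarrow> A *\<^sub>v 0\<^sub>v b = (0\<^sub>v a :: complex Matrix.vec)"
  by (auto intro!: eq_vecI simp: scalar_prod_def)

lemma ell2_zero: "ell2 k (\<lambda>j. 0\<^sub>v k)"
  unfolding ell2_def vnorm2_def by simp

context
  fixes n r m :: nat and A C :: "complex mat" and \<Phi> :: "complex \<Rightarrow> complex mat"
  assumes Acar: "A \<in> carrier_mat n n" and Ccar: "C \<in> carrier_mat m n" and RH: "RH_inf r m \<Phi>"
begin

lemma W_eq: "x \<in> carrier_vec n \<Longrightarrow> W_obs C A x j = C *\<^sub>v ((A ^\<^sub>m j) *\<^sub>v x)"
  unfolding W_obs_def obs_op_def by (simp add: funpow_mat[OF Acar])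

lemma X_sub: "X_Phi n r m C A \<Phi> \<subseteq> carrier_vec n"
  unfolding X_Phi_def by auto

lemma X_I: "x \<in> carrier_vec n \<Longrightarrow> ell2 r y \<Longrightarrow> W_obs C A x = T_op_adj r m \<Phi> y \<Longrightarrow> x \<in> X_Phi n r m C A \<Phi>"
  unfolding X_Phi_def by auto

lemma X_E:
  assumes "x \<in> X_Phi n r m C A \<Phi>"
  obtains y where "x \<in> carrier_vec n" "ell2 r y" "W_obs C A x = T_op_adj r m \<Phi> y"
  using assms unfolding X_Phi_def by auto

lemma X_add:
  assumes x1: "x1 \<in> X_Phi n r m C A \<Phi>" and x2: "x2 \<in> X_Phi n r m C A \<Phi>"
  shows "x1 + x2 \<in> X_Phi n r m C A \<Phi>"
proof -
  obtain y1 where 1: "x1 \<in> carrier_vec n" "ell2 r y1" "W_obs C A x1 = T_op_adj r m \<Phi> y1" by (rule X_E[OF x1])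
  obtain y2 where 2: "x2 \<in> carrier_vec n" "ell2 r y2" "W_obs C A x2 = T_op_adj r m \<Phi> y2" by (rule X_E[OF x2])
  show ?thesis
  proof (rule X_I)
    show "x1 + x2 \<in> carrier_vec n" using 1 2 by simp
    show "ell2 r (\<lambda>j. y1 j + y2 j)" by (rule ell2_add[OF 1(2) 2(2)])
    show "W_obs C A (x1 + x2) = T_op_adj r m \<Phi> (\<lambda>j. y1 j + y2 j)"
    proof
      fix j
      have p: "A ^\<^sub>m j \<in> carrier_mat n n" using Acar by simp
      have "W_obs C A (x1 + x2) j = C *\<^sub>v ((A ^\<^sub>m j) *\<^sub>v (x1 + x2))"
        using 1(1) 2(1) by (simp add: W_eq)
      also have "\<dots> = C *\<^sub>v ((A ^\<^sub>m j) *\<^sub>v x1 + (A ^\<^sub>m j) *\<^sub>v x2)"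
        by (simp add: mult_add_distrib_mat_vec[OF p 1(1) 2(1)])
      also have "\<dots> = C *\<^sub>v ((A ^\<^sub>m j) *\<^sub>v x1) + C *\<^sub>v ((A ^\<^sub>m j) *\<^sub>v x2)"
        by (rule mult_add_distrib_mat_vec[OF Ccar]) (use p 1(1) 2(1) in auto)
      also have "\<dots> = W_obs C A x1 j + W_obs C A x2 j" using 1(1) 2(1) by (simp add: W_eq)
      finally have "W_obs C A (x1 + x2) j = W_obs C A x1 j + W_obs C A x2 j" .
      also have "\<dots> = T_op_adj r m \<Phi> (\<lambda>j. y1 j + y2 j) j"
        using 1(3) 2(3) T_add[OF RH 1(2) 2(2)] by simp
      finally show "W_obs C A (x1 + x2) j = T_op_adj r m \<Phi> (\<lambda>j. y1 j + y2 j) j" .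
    qed
  qed
qed

lemma X_smult:
  assumes x: "x \<in> X_Phi n r m C A \<Phi>"
  shows "c \<cdot>\<^sub>v x \<in> X_Phi n r m C A \<Phi>"
proof -
  obtain y where 1: "x \<in> carrier_vec n" "ell2 r y" "W_obs C A x = T_op_adj r m \<Phi> y" by (rule X_E[OF x])
  show ?thesis
  proof (rule X_I)
    show "c \<cdot>\<^sub>v x \<in> carrier_vec n" using 1 by simp
    show "ell2 r (\<lambda>j. c \<cdot>\<^sub>v y j)" by (rule ell2_smult[OF 1(2)])
    show "W_obs C A (c \<cdot>\<^sub>v x) = T_op_adj r m \<Phi> (\<lambda>j. c \<cdot>\<^sub>v y j)"
    proof
      fix j
      have p: "A ^\<^sub>m j \<in> carrier_mat n n" using Acar by simp
      have "W_obs C A (c \<cdot>\<^sub>v x) j = C *\<^sub>v ((A ^\<^sub>m j) *\<^sub>v (c \<cdot>\<^sub>v x))"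
        using 1(1) by (simp add: W_eq)
      also have "\<dots> = C *\<^sub>v (c \<cdot>\<^sub>v ((A ^\<^sub>m j) *\<^sub>v x))"
        by (simp add: mult_mat_vec[OF p 1(1)])
      also have "\<dots> = c \<cdot>\<^sub>v (C *\<^sub>v ((A ^\<^sub>m j) *\<^sub>v x))"
        by (rule mult_mat_vec[OF Ccar]) (use p 1(1) in auto)
      also have "\<dots> = c \<cdot>\<^sub>v W_obs C A x j" using 1(1) by (simp add: W_eq)
      finally have "W_obs C A (c \<cdot>\<^sub>v x) j = c \<cdot>\<^sub>v W_obs C A x j" .
      also have "\<dots> = T_op_adj r m \<Phi> (\<lambda>j. c \<cdot>\<^sub>v y j) j"
        using 1(3) T_smult[OF RH 1(2)] by simp
      finally show "W_obs C A (c \<cdot>\<^sub>v x) j = T_op_adj r m \<Phi> (\<lambda>j. c \<cdot>\<^sub>v y j) j" .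
    qed
  qed
qed

lemma X_diff:
  assumes x1: "x1 \<in> X_Phi n r m C A \<Phi>" and x2: "x2 \<in> X_Phi n r m C A \<Phi>"
  shows "x1 - x2 \<in> X_Phi n r m C A \<Phi>"
proof -
  have c1: "x1 \<in> carrier_vec n" and c2: "x2 \<in> carrier_vec n" using x1 x2 X_sub by auto
  have "x1 - x2 = x1 + (-1) \<cdot>\<^sub>v x2" using c1 c2 by (auto intro!: eq_vecI)
  then show ?thesis using X_add[OF x1 X_smult[OF x2]] by simp
qed

lemma X_zero: "0\<^sub>v n \<in> X_Phi n r m C A \<Phi>"
proof (rule X_I)
  show "0\<^sub>v n \<in> carrier_vec n" by simp
  show "ell2 r (\<lambda>j. 0 \<cdot>\<^sub>v 0\<^sub>v r)" by (rule ell2_smult[OF ell2_zero])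
  show "W_obs C A (0\<^sub>v n) = T_op_adj r m \<Phi> (\<lambda>j. 0 \<cdot>\<^sub>v 0\<^sub>v r)"
  proof
    fix j
    have "T_op_adj r m \<Phi> (\<lambda>j. 0 \<cdot>\<^sub>v 0\<^sub>v r) j = 0 \<cdot>\<^sub>v T_op_adj r m \<Phi> (\<lambda>j. 0\<^sub>v r) j"
      by (rule T_smult[OF RH ell2_zero])
    also have "\<dots> = 0\<^sub>v m" by (auto simp: T_dim[OF RH])
    also have "\<dots> = W_obs C A (0\<^sub>v n) j"
      using Acar Ccar by (simp add: W_eq mat_vec_zero[of _ n n] mat_vec_zero[of _ m n])
    finally show "W_obs C A (0\<^sub>v n) j = T_op_adj r m \<Phi> (\<lambda>j. 0 \<cdot>\<^sub>v 0\<^sub>v r) j" ..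
  qed
qed

lemma X_A:
  assumes x: "x \<in> X_Phi n r m C A \<Phi>"
  shows "A *\<^sub>v x \<in> X_Phi n r m C A \<Phi>"
proof -
  obtain y where 1: "x \<in> carrier_vec n" "ell2 r y" "W_obs C A x = T_op_adj r m \<Phi> y" by (rule X_E[OF x])
  show ?thesis
  proof (rule X_I)
    show "A *\<^sub>v x \<in> carrier_vec n" using 1 Acar by simp
    show "ell2 r (\<lambda>j. y (Suc j))" by (rule ell2_shift[OF 1(2)])
    show "W_obs C A (A *\<^sub>v x) = T_op_adj r m \<Phi> (\<lambda>j. y (Suc j))"
    proof
      fix j
      have "W_obs C A (A *\<^sub>v x) j = W_obs C A x (Suc j)"
        unfolding W_obs_def obs_op_def by (simp add: funpow_Suc_right del: funpow.simps)
      also have "\<dots> = T_op_adj r m \<Phi> (\<lambda>j. y (Suc j)) j"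
        using 1(3) T_shift[OF RH 1(2)] by simp
      finally show "W_obs C A (A *\<^sub>v x) j = T_op_adj r m \<Phi> (\<lambda>j. y (Suc j)) j" .
    qed
  qed
qed

lemma orth_proj_X:
  assumes v: "v \<in> X_Phi n r m C A \<Phi>"
  shows "orth_proj (X_Phi n r m C A \<Phi>) v = v"
  unfolding orth_proj_def
proof (rule the_equality)
  have cv: "v \<in> carrier_vec n" using v X_sub by auto
  show "v \<in> X_Phi n r m C A \<Phi> \<and> (\<forall>w\<in>X_Phi n r m C A \<Phi>. (v - v) \<bullet>c w = 0)"
  proof (intro conjI ballI)
    fix w assume "w \<in> X_Phi n r m C A \<Phi>"
    then have cw: "w \<in> carrier_vec n" using X_sub by auto
    have "v - v = 0\<^sub>v n" using cv by (auto intro!: eq_vecI)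
    then show "(v - v) \<bullet>c w = 0" using cw by simp
  qed (rule v)
  fix p assume p: "p \<in> X_Phi n r m C A \<Phi> \<and> (\<forall>w\<in>X_Phi n r m C A \<Phi>. (v - p) \<bullet>c w = 0)"
  have cp: "p \<in> carrier_vec n" using p X_sub by auto
  have "v - p \<in> X_Phi n r m C A \<Phi>" by (rule X_diff[OF v]) (use p in auto)
  then have "(v - p) \<bullet>c (v - p) = 0" using p by blast
  then have "v - p = 0\<^sub>v n" using conjugate_square_eq_0_vec[of "v - p" n] cv cp by simp
  then have vp: "v - p = 0\<^sub>v n" .
  show "p = v"
  proof (rule eq_vecI)
    fix i assume "i < dim_vec v"
    then have i: "i < n" using cv by simp
    have "vec_index (v - p) i = 0" using vp i by simp
    then show "vec_index p i = vec_index v i" using cv cp i by simp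
  qed (use cv cp in simp)
qed

end

lemma pow_mat_add:
  assumes A: "A \<in> carrier_mat n n"
  shows "A ^\<^sub>m k * A ^\<^sub>m v = A ^\<^sub>m (k + v)"
proof (induction v)
  case 0 then show ?case using A by simp
next
  case (Suc v)
  have "A ^\<^sub>m k * A ^\<^sub>m Suc v = A ^\<^sub>m k * (A ^\<^sub>m v * A)" by simp
  also have "\<dots> = (A ^\<^sub>m k * A ^\<^sub>m v) * A" using A by (simp add: assoc_mult_mat[of _ n n _ n _ n])
  also have "\<dots> = A ^\<^sub>m (k + Suc v)" using Suc by simp
  finally show ?case .
qed

lemma sq_summable:
  fixes h :: "nat \<Rightarrow> complex"
  assumes s: "summable (\<lambda>j. norm (h j))"
  shows "summable (\<lambda>j. (cmod (h j))\<^sup>2)"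
proof (rule summable_comparison_test_ev[OF _ s])
  have "(\<lambda>j. norm (h j)) \<longlonglongrightarrow> 0" by (rule summable_LIMSEQ_zero[OF s])
  then have "eventually (\<lambda>j. norm (h j) < 1) sequentially" by (rule order_tendstoD) simp
  then show "eventually (\<lambda>j. norm ((cmod (h j))\<^sup>2) \<le> norm (h j)) sequentially"
  proof (rule eventually_mono)
    fix j assume "norm (h j) < 1"
    then show "norm ((cmod (h j))\<^sup>2) \<le> norm (h j)"
      by (simp add: power2_eq_square mult_le_one mult_left_le)
  qed
qed

context
  fixes r m :: nat and \<Phi> :: "complex \<Rightarrow> complex mat"
  assumes RH: "RH_inf r m \<Phi>"
begin

lemma FC_summable_shift:
  assumes a: "a < r" and b: "b < m"
  shows "summable (\<lambda>j. cmod (FC (\<lambda>z. \<Phi> z $$ (a,b)) (int j + int s)))"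
proof -
  obtain K \<rho> where K: "0 \<le> K" "0 < \<rho>" "\<rho> < 1" "\<And>n. cmod (FC (\<lambda>z. \<Phi> z $$ (a,b)) (int n)) \<le> K * \<rho> ^ n"
    by (rule good_decay[OF gP[OF RH a b]]) blast
  show ?thesis
  proof (rule summable_comparison_test_ev)
    show "eventually (\<lambda>j. norm (cmod (FC (\<lambda>z. \<Phi> z $$ (a,b)) (int j + int s))) \<le> K * \<rho> ^ s * \<rho> ^ j) sequentially"
    proof (rule always_eventually, rule allI)
      fix j
      have "cmod (FC (\<lambda>z. \<Phi> z $$ (a,b)) (int j + int s)) \<le> K * \<rho> ^ (j + s)"
        using K(4)[of "j + s"] by simp
      then show "norm (cmod (FC (\<lambda>z. \<Phi> z $$ (a,b)) (int j + int s))) \<le> K * \<rho> ^ s * \<rho> ^ j"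
        by (simp add: power_add mult_ac)
    qed
    show "summable (\<lambda>j. K * \<rho> ^ s * \<rho> ^ j)"
      by (rule summable_mult, rule summable_geometric) (use K in auto)
  qed
qed

lemma ell2_Gu:
  assumes u: "u \<in> carrier_vec m"
  shows "ell2 r (\<lambda>j. fourier_coeff r m \<Phi> (int j + int s) *\<^sub>v u)"
  unfolding ell2_def
proof (intro conjI allI)
  fix j show "fourier_coeff r m \<Phi> (int j + int s) *\<^sub>v u \<in> carrier_vec r"
    by (rule mult_mat_vec_carrier[OF fc_car[OF RH] u])
next
  have sa: "summable (\<lambda>j. (cmod (vec_index (fourier_coeff r m \<Phi> (int j + int s) *\<^sub>v u) a))\<^sup>2)" if a: "a < r" for a
  proof (rule sq_summable)
    have "summable (\<lambda>j. \<Sum>b<m. cmod (FC (\<lambda>z. \<Phi> z $$ (a,b)) (int j + int s)) * cmod (vec_index u b))"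
      by (intro summable_sum summable_mult2 FC_summable_shift a) simp
    then show "summable (\<lambda>j. norm (vec_index (fourier_coeff r m \<Phi> (int j + int s) *\<^sub>v u) a))"
    proof (rule summable_comparison_test[rotated], intro exI allI impI)
      fix j
      have "norm (vec_index (fourier_coeff r m \<Phi> (int j + int s) *\<^sub>v u) a)
          = norm (\<Sum>b<m. FC (\<lambda>z. \<Phi> z $$ (a,b)) (int j + int s) * vec_index u b)"
        by (simp add: G_vec[OF RH u a])
      also have "\<dots> \<le> (\<Sum>b<m. cmod (FC (\<lambda>z. \<Phi> z $$ (a,b)) (int j + int s)) * cmod (vec_index u b))"
        by (rule order_trans[OF norm_sum]) (simp add: norm_mult)
      finally show "norm (norm (vec_index (fourier_coeff r m \<Phi> (int j + int s) *\<^sub>v u) a))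
          \<le> (\<Sum>b<m. cmod (FC (\<lambda>z. \<Phi> z $$ (a,b)) (int j + int s)) * cmod (vec_index u b))" by simp
    qed
  qed
  have "summable (\<lambda>j. \<Sum>a<r. (cmod (vec_index (fourier_coeff r m \<Phi> (int j + int s) *\<^sub>v u) a))\<^sup>2)"
    by (rule summable_sum) (use sa in auto)
  then show "summable (\<lambda>j. vnorm2 (fourier_coeff r m \<Phi> (int j + int s) *\<^sub>v u))"
  proof -
    have dimr: "dim_vec (fourier_coeff r m \<Phi> (int j + int s) *\<^sub>v u) = r" for j
      using fc_car[OF RH, of "int j + int s"] by (simp add: carrier_matD)
    show ?thesis unfolding vnorm2_def dimr by fact
  qed
qed

end

lemma matvec_entry:
  assumes M: "M \<in> carrier_mat p q" and u: "u \<in> carrier_vec q" and l: "l < p"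
  shows "vec_index (M *\<^sub>v u) l = (\<Sum>b<q. M $$ (l,b) * vec_index u b)"
  using M u l by (auto simp: scalar_prod_def lessThan_atLeast0 intro!: sum.cong)

context
  fixes n m r :: nat
    and A C \<Gamma> R\<^sub>0 :: "complex mat"
    and R \<Phi> :: "complex \<Rightarrow> complex mat"
  assumes st: "stable_mat n A"
    and C: "C \<in> carrier_mat m n"
    and Gam: "\<Gamma> \<in> carrier_mat n m"
    and R0: "R\<^sub>0 \<in> carrier_mat m m"
    and R_real: "\<forall>\<zeta>. cmod \<zeta> = 1 \<longrightarrow>
        R \<zeta> = \<zeta> \<cdot>\<^sub>m (C * minv n (1\<^sub>m n - \<zeta> \<cdot>\<^sub>m A) * \<Gamma>) + R\<^sub>0
              + mat_adjoint \<Gamma> * minv n (\<zeta> \<cdot>\<^sub>m 1\<^sub>m n - mat_adjoint A) * mat_adjoint C"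
    and Phi: "outer_spectral_factor r m R \<Phi>"
begin

lemma RH: "RH_inf r m \<Phi>" using Phi unfolding outer_spectral_factor_def by auto

lemma Acar': "A \<in> carrier_mat n n" by (rule Acar[OF st])

lemma key_X:
  assumes u: "u \<in> carrier_vec m"
  shows "(A ^\<^sub>m \<nu> * \<Gamma>) *\<^sub>v u \<in> X_Phi n r m C A \<Phi>"
proof -
  define y where "y j = fourier_coeff r m \<Phi> (int j + int (Suc \<nu>)) *\<^sub>v u" for j
  define x where "x = (A ^\<^sub>m \<nu> * \<Gamma>) *\<^sub>v u"
  have Ap: "A ^\<^sub>m k \<in> carrier_mat n n" for k using Acar' by simp
  have xc: "x \<in> carrier_vec n" unfolding x_def by (rule mult_mat_vec_carrier[OF mult_carrier_mat[OF Ap Gam] u])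
  have gu: "\<Gamma> *\<^sub>v u \<in> carrier_vec n" by (rule mult_mat_vec_carrier[OF Gam u])
  have ey: "ell2 r y" unfolding y_def by (rule ell2_Gu[OF RH u])
  have yc: "y j \<in> carrier_vec r" for j by (rule ell2_car[OF ey])
  have "x \<in> X_Phi n r m C A \<Phi>"
  proof (rule X_I[OF Acar' C RH xc ey])
    show "W_obs C A x = T_op_adj r m \<Phi> y"
    proof
      fix k
      define M where "M = C * A ^\<^sub>m (k + \<nu>) * \<Gamma>"
      have Mc: "M \<in> carrier_mat m m" unfolding M_def by (rule mult_carrier_mat[OF mult_carrier_mat[OF C Ap] Gam])
      have W: "W_obs C A x k = M *\<^sub>v u"
      proof -
        have "W_obs C A x k = C *\<^sub>v ((A ^\<^sub>m k) *\<^sub>v ((A ^\<^sub>m \<nu> * \<Gamma>) *\<^sub>v u))"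
          unfolding x_def using W_eq[OF Acar' C RH] xc x_def by simp
        also have "\<dots> = C *\<^sub>v ((A ^\<^sub>m k) *\<^sub>v (A ^\<^sub>m \<nu> *\<^sub>v (\<Gamma> *\<^sub>v u)))"
          by (simp only: assoc_mult_mat_vec[OF Ap Gam u])
        also have "\<dots> = C *\<^sub>v ((A ^\<^sub>m k * A ^\<^sub>m \<nu>) *\<^sub>v (\<Gamma> *\<^sub>v u))"
          by (simp only: assoc_mult_mat_vec[OF Ap Ap gu])
        also have "\<dots> = C *\<^sub>v (A ^\<^sub>m (k + \<nu>) *\<^sub>v (\<Gamma> *\<^sub>v u))"
          by (simp add: pow_mat_add[OF Acar'])
        also have "\<dots> = (C * A ^\<^sub>m (k + \<nu>)) *\<^sub>v (\<Gamma> *\<^sub>v u)"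
          by (simp only: assoc_mult_mat_vec[OF C Ap gu])
        also have "\<dots> = M *\<^sub>v u"
          unfolding M_def by (simp only: assoc_mult_mat_vec[OF mult_carrier_mat[OF C Ap] Gam u])
        finally show ?thesis .
      qed
      show "W_obs C A x k = T_op_adj r m \<Phi> y k"
      proof (rule eq_vecI)
        show "dim_vec (W_obs C A x k) = dim_vec (T_op_adj r m \<Phi> y k)"
          unfolding W using Mc by (simp add: T_dim[OF RH])
        fix l assume "l < dim_vec (T_op_adj r m \<Phi> y k)"
        then have l: "l < m" by (simp add: T_dim[OF RH])
        define f where "f j = (\<Sum>a<r. cnj (FC (\<lambda>z. \<Phi> z $$ (a,l)) (int j - int k)) *
             (\<Sum>b<m. FC (\<lambda>z. \<Phi> z $$ (a,b)) (int j + int (Suc \<nu>)) * vec_index u b))" for j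
        have Tf: "vec_index (T_op_adj r m \<Phi> y k) l = suminf f"
          unfolding T_entry[OF RH yc l] f_def y_def
          by (rule arg_cong[where f=suminf], rule ext, rule sum.cong[OF refl]) (simp add: G_vec[OF RH u])
        have shift: "f (i + k) = (\<Sum>b<m. vec_index u b * (\<Sum>a<r. cnj (FC (\<lambda>z. \<Phi> z $$ (a,l)) (int i)) *
              FC (\<lambda>z. \<Phi> z $$ (a,b)) (int i + int (Suc (k + \<nu>)))))" for i
        proof -
          have e1: "int (i + k) - int k = int i" by simp
          have e2: "int (i + k) + int (Suc \<nu>) = int i + int (Suc (k + \<nu>))" by simp
          show ?thesis unfolding f_def e1 e2
            by (simp add: sum_distrib_left sum_distrib_right mult_ac sum.swap[of _ "{..<r}"])
        qed
        have S: "(\<lambda>i. \<Sum>b<m. vec_index u b * (\<Sum>a<r. cnj (FC (\<lambda>z. \<Phi> z $$ (a,l)) (int i)) *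
              FC (\<lambda>z. \<Phi> z $$ (a,b)) (int i + int (Suc (k + \<nu>)))))
            sums (\<Sum>b<m. vec_index u b * M $$ (l,b))"
        proof (rule sums_sum)
          fix b assume "b \<in> {..<m}" then have b: "b < m" by simp
          show "(\<lambda>i. vec_index u b * (\<Sum>a<r. cnj (FC (\<lambda>z. \<Phi> z $$ (a,l)) (int i)) *
              FC (\<lambda>z. \<Phi> z $$ (a,b)) (int i + int (Suc (k + \<nu>)))))
            sums (vec_index u b * M $$ (l,b))"
            unfolding M_def by (rule sums_mult, rule FC_R_sums[OF st C Gam R0 R_real Phi l b])
        qed
        have z: "(\<Sum>i<k. f i) = 0"
        proof (rule sum.neutral, rule ballI)
          fix i assume "i \<in> {..<k}"
          then have "int i - int k < 0" by simp
          then show "f i = 0" unfolding f_def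
            by (intro sum.neutral ballI) (simp add: good_FC_neg[OF gP[OF RH _ l]])
        qed
        have "f sums (\<Sum>b<m. vec_index u b * M $$ (l,b))"
          using S unfolding shift[symmetric] sums_iff_shift z by simp
        then have "suminf f = (\<Sum>b<m. M $$ (l,b) * vec_index u b)"
          by (simp add: sums_unique[symmetric] mult.commute)
        then show "vec_index (W_obs C A x k) l = vec_index (T_op_adj r m \<Phi> y k) l"
          unfolding Tf W matvec_entry[OF Mc u l] by simp
      qed
    qed
  qed
  then show ?thesis unfolding x_def .
qed

end

theorem corollary2p2:
  fixes n m r :: nat
    and A C \<Gamma> R\<^sub>0 C\<^sub>\<Phi> :: "complex mat"
    and R \<Phi> :: "complex \<Rightarrow> complex mat"
  assumes A: "stable_mat n A"
    and C: "C \<in> carrier_mat m n"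
    and Gam: "\<Gamma> \<in> carrier_mat n m"
    and R0: "R\<^sub>0 \<in> carrier_mat m m"
    and R_real: "\<forall>\<zeta>. cmod \<zeta> = 1 \<longrightarrow>
        R \<zeta> = \<zeta> \<cdot>\<^sub>m (C * minv n (1\<^sub>m n - \<zeta> \<cdot>\<^sub>m A) * \<Gamma>) + R\<^sub>0
              + mat_adjoint \<Gamma> * minv n (\<zeta> \<cdot>\<^sub>m 1\<^sub>m n - mat_adjoint A) * mat_adjoint C"
    and R_nonzero: "\<exists>\<zeta>. cmod \<zeta> = 1 \<and> R \<zeta> \<noteq> 0\<^sub>m m m"
    and R_pos: "\<forall>\<zeta>. cmod \<zeta> = 1 \<longrightarrow> psd_mat m (R \<zeta>)"
    and Phi: "outer_spectral_factor r m R \<Phi>"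
    and CPhi: "C\<^sub>\<Phi> \<in> carrier_mat r n"
    and Phi_real: "\<forall>z. cmod z \<le> 1 \<longrightarrow>
        \<Phi> z = \<Phi> 0 + z \<cdot>\<^sub>m (C\<^sub>\<Phi> * minv n (1\<^sub>m n - z \<cdot>\<^sub>m A) * \<Gamma>)"
    and CPhi_obs: "\<forall>x \<in> X_Phi n r m C A \<Phi>.
        W_obs C A x = T_op_adj r m \<Phi> (W_obs C\<^sub>\<Phi> A x)"
  shows
    "(observable n C A \<longrightarrow>
        inj_on (W_obs C\<^sub>\<Phi> A) (X_Phi n r m C A \<Phi>) \<and>
        (\<forall>x \<in> X_Phi n r m C A \<Phi>.
           W_obs C\<^sub>\<Phi> A x = obs_op (\<lambda>v. C\<^sub>\<Phi> *\<^sub>v v) (\<lambda>v. orth_proj (X_Phi n r m C A \<Phi>) (A *\<^sub>v v)) x) \<and>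
        inj_on (obs_op (\<lambda>v. C\<^sub>\<Phi> *\<^sub>v v) (\<lambda>v. orth_proj (X_Phi n r m C A \<Phi>) (A *\<^sub>v v)))
               (X_Phi n r m C A \<Phi>))
     \<and> (controllable n m A \<Gamma> \<longrightarrow> X_Phi n r m C A \<Phi> = carrier_vec n)
     \<and> (observable n C A \<and> controllable n m A \<Gamma> \<longrightarrow> minimal_realization n m C\<^sub>\<Phi> A \<Gamma>)"
proof -
  have Ac: "A \<in> carrier_mat n n" by (rule Acar[OF A])
  have RH: "RH_inf r m \<Phi>" using Phi unfolding outer_spectral_factor_def by auto
  define X where "X = X_Phi n r m C A \<Phi>"
  have Xsub: "X \<subseteq> carrier_vec n" unfolding X_def by (rule X_sub[OF Ac C RH])
  have XA: "\<And>x. x \<in> X \<Longrightarrow> A *\<^sub>v x \<in> X" unfolding X_def by (rule X_A[OF Ac C RH])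
  have XP: "\<And>x. x \<in> X \<Longrightarrow> orth_proj X x = x" unfolding X_def using Ac C RH by (simp add: orth_proj_X)
  have inj1: "inj_on (W_obs C\<^sub>\<Phi> A) X" if obs: "observable n C A"
  proof (rule inj_onI)
    fix x1 x2 assume x1: "x1 \<in> X" and x2: "x2 \<in> X" and eq: "W_obs C\<^sub>\<Phi> A x1 = W_obs C\<^sub>\<Phi> A x2"
    have "W_obs C A x1 = W_obs C A x2"
      using CPhi_obs x1 x2 eq unfolding X_def by auto
    moreover have "x1 \<in> carrier_vec n" "x2 \<in> carrier_vec n" using x1 x2 Xsub by auto
    ultimately show "x1 = x2" using obs unfolding observable_def by (auto dest: inj_onD)
  qed
  have iter: "\<And>x. x \<in> X \<Longrightarrow> ((\<lambda>v. orth_proj X (A *\<^sub>v v)) ^^ j) x = ((\<lambda>v. A *\<^sub>v v) ^^ j) x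
        \<and> ((\<lambda>v. A *\<^sub>v v) ^^ j) x \<in> X" for j
  proof (induction j)
    case 0 then show ?case by simp
  next
    case (Suc j)
    then have IH: "((\<lambda>v. orth_proj X (A *\<^sub>v v)) ^^ j) x = ((\<lambda>v. A *\<^sub>v v) ^^ j) x"
      "((\<lambda>v. A *\<^sub>v v) ^^ j) x \<in> X" by auto
    have inX: "A *\<^sub>v ((\<lambda>v. A *\<^sub>v v) ^^ j) x \<in> X" by (rule XA[OF IH(2)])
    show ?case using IH inX XP[OF inX] by simp
  qed
  have eqW: "W_obs C\<^sub>\<Phi> A x = obs_op (\<lambda>v. C\<^sub>\<Phi> *\<^sub>v v) (\<lambda>v. orth_proj X (A *\<^sub>v v)) x" if "x \<in> X" for x
    unfolding W_obs_def obs_op_def using iter[OF that] by auto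
  have ctrl: "X = carrier_vec n" if ct: "controllable n m A \<Gamma>"
  proof
    show "X \<subseteq> carrier_vec n" by (rule Xsub)
    show "carrier_vec n \<subseteq> X"
    proof
      fix x :: "complex Matrix.vec" assume x: "x \<in> carrier_vec n"
      obtain N u where u: "\<forall>\<nu><N. u \<nu> \<in> carrier_vec m"
        and xe: "x = finsum_vec TYPE(complex) n (\<lambda>\<nu>. (A ^\<^sub>m \<nu> * \<Gamma>) *\<^sub>v u \<nu>) {..<N}"
        using ct x unfolding controllable_def by blast
      have "finsum_vec TYPE(complex) n (\<lambda>\<nu>. (A ^\<^sub>m \<nu> * \<Gamma>) *\<^sub>v u \<nu>) {..<N'} \<in> X" if "N' \<le> N" for N'
        using that
      proof (induction N')
        case 0 then show ?case using X_zero[OF Ac C RH] unfolding X_def by (simp add: finsum_vec_empty)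
      next
        case (Suc N')
        have uN: "u N' \<in> carrier_vec m" using u Suc.prems by auto
        have fc: "(\<lambda>\<nu>. (A ^\<^sub>m \<nu> * \<Gamma>) *\<^sub>v u \<nu>) \<in> {..<N'} \<rightarrow> carrier_vec n"
        proof
          fix \<nu> assume "\<nu> \<in> {..<N'}"
          then have "u \<nu> \<in> carrier_vec m" using u Suc.prems by auto
          then show "(A ^\<^sub>m \<nu> * \<Gamma>) *\<^sub>v u \<nu> \<in> carrier_vec n"
            using Ac Gam by (intro mult_mat_vec_carrier[of _ n m] mult_carrier_mat[of _ n n]) auto
        qed
        have fN: "(A ^\<^sub>m N' * \<Gamma>) *\<^sub>v u N' \<in> carrier_vec n"
          using Ac Gam uN by (intro mult_mat_vec_carrier[of _ n m] mult_carrier_mat[of _ n n]) auto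
        have "finsum_vec TYPE(complex) n (\<lambda>\<nu>. (A ^\<^sub>m \<nu> * \<Gamma>) *\<^sub>v u \<nu>) {..<Suc N'} =
            (A ^\<^sub>m N' * \<Gamma>) *\<^sub>v u N' + finsum_vec TYPE(complex) n (\<lambda>\<nu>. (A ^\<^sub>m \<nu> * \<Gamma>) *\<^sub>v u \<nu>) {..<N'}"
          unfolding lessThan_Suc by (rule finsum_vec_insert[OF _ _ fc fN]) auto
        moreover have "(A ^\<^sub>m N' * \<Gamma>) *\<^sub>v u N' \<in> X"
          unfolding X_def by (rule key_X[OF A C Gam R0 R_real Phi uN])
        moreover have "finsum_vec TYPE(complex) n (\<lambda>\<nu>. (A ^\<^sub>m \<nu> * \<Gamma>) *\<^sub>v u \<nu>) {..<N'} \<in> X"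
          using Suc by simp
        ultimately show ?case unfolding X_def using X_add[OF Ac C RH] by simp
      qed
      then show "x \<in> X" using xe by simp
    qed
  qed
  have part1: "observable n C A \<longrightarrow>
        inj_on (W_obs C\<^sub>\<Phi> A) X \<and>
        (\<forall>x \<in> X. W_obs C\<^sub>\<Phi> A x = obs_op (\<lambda>v. C\<^sub>\<Phi> *\<^sub>v v) (\<lambda>v. orth_proj X (A *\<^sub>v v)) x) \<and>
        inj_on (obs_op (\<lambda>v. C\<^sub>\<Phi> *\<^sub>v v) (\<lambda>v. orth_proj X (A *\<^sub>v v))) X"
  proof
    assume obs: "observable n C A"
    have i1: "inj_on (W_obs C\<^sub>\<Phi> A) X" by (rule inj1[OF obs])
    moreover have "\<forall>x \<in> X. W_obs C\<^sub>\<Phi> A x = obs_op (\<lambda>v. C\<^sub>\<Phi> *\<^sub>v v) (\<lambda>v. orth_proj X (A *\<^sub>v v)) x"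
      using eqW by blast
    moreover have "inj_on (obs_op (\<lambda>v. C\<^sub>\<Phi> *\<^sub>v v) (\<lambda>v. orth_proj X (A *\<^sub>v v))) X"
      using i1 inj_on_cong[of X "W_obs C\<^sub>\<Phi> A" "obs_op (\<lambda>v. C\<^sub>\<Phi> *\<^sub>v v) (\<lambda>v. orth_proj X (A *\<^sub>v v))"] eqW
      by simp
    ultimately show "inj_on (W_obs C\<^sub>\<Phi> A) X \<and>
        (\<forall>x \<in> X. W_obs C\<^sub>\<Phi> A x = obs_op (\<lambda>v. C\<^sub>\<Phi> *\<^sub>v v) (\<lambda>v. orth_proj X (A *\<^sub>v v)) x) \<and>
        inj_on (obs_op (\<lambda>v. C\<^sub>\<Phi> *\<^sub>v v) (\<lambda>v. orth_proj X (A *\<^sub>v v))) X" by blast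
  qed
  have part3: "observable n C A \<and> controllable n m A \<Gamma> \<longrightarrow> minimal_realization n m C\<^sub>\<Phi> A \<Gamma>"
  proof
    assume oc: "observable n C A \<and> controllable n m A \<Gamma>"
    then have "inj_on (W_obs C\<^sub>\<Phi> A) (carrier_vec n)" using inj1 ctrl by auto
    then show "minimal_realization n m C\<^sub>\<Phi> A \<Gamma>"
      using oc unfolding minimal_realization_def observable_def by simp
  qed
  show ?thesis using part1 ctrl part3 unfolding X_def by blast
qed

end
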